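(* Let $H$ be a separable complex Hilbert space, $(\Omega,\mu)$ a measure space with positive measure, let $K\in B(H)$ have closed range, let $F:\Omega\to H$ be a Parseval continuous $K$-frame of $H$, and let $\tilde F(\omega)=K^{\dagger}F(\omega)$ be its canonical dual continuous $K$-Bessel sequence. Then: (1) $F$ is continuous $L^2$-independent if and only if $\tilde F$ is continuous $L^2$-independent; (2) if $F$ admits a unique dual continuous $K$-Bessel sequence, then $\tilde F$ admits a unique dual continuous $K^{\ast}$-Bessel sequence.
   Context: A map $F:\Omega\to H$ is weakly measurable if $\omega\mapsto\langle f,F(\omega)\rangle$ is measurable for every $f\in H$. A continuous Bessel sequence is a weakly measurable $G$ with $\int_\Omega|\langle f,G(\omega)\rangle|^2\,d\mu(\omega)\le B\|f\|^2$ for all $f\in H$, for some $B>0$. A Parseval continuous $K$-frame is a weakly measurable $F$ with $\int_\Omega|\langle f,F(\omega)\rangle|^2\,d\mu(\omega)=\|K^{\ast}f\|^2$ for all $f\in H$. For $L\in B(H)$ and a map $E:\Omega\to H$, a dual continuous $L$-Bessel sequence of $E$ is a continuous Bessel sequence $G$ with $Lf=\int_\Omega\langle f,G(\omega)\rangle E(\omega)\,d\mu(\omega)$ for all $f\in H$. A continuous Bessel mapping $E$ is (continuous) $L^2$-independent if $\int_\Omega\phi(\omega)E(\omega)\,d\mu(\omega)=0$ with $\phi\in L^2(\Omega,\mu)$ implies $\phi=0$ a.e. $K^{\dagger}$ is the Moore–Penrose pseudo-inverse of $K$; the canonical dual continuous $K$-Bessel sequence of $F$ is $K^{\dagger}F$.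 *)

theory Defs
  imports "HOL-Analysis.Analysis"
begin

class complex_inner = real_normed_vector +
  fixes scaleC :: "complex \<Rightarrow> 'a \<Rightarrow> 'a" (infixr \<open>*\<^sub>C\<close> 75)
    and cinner :: "'a \<Rightarrow> 'a \<Rightarrow> complex"
  assumes scaleC_add_right: "a *\<^sub>C (x + y) = a *\<^sub>C x + a *\<^sub>C y"
    and scaleC_add_left: "(a + b) *\<^sub>C x = a *\<^sub>C x + b *\<^sub>C x"
    and scaleC_scaleC: "a *\<^sub>C (b *\<^sub>C x) = (a * b) *\<^sub>C x"
    and scaleC_one: "1 *\<^sub>C x = x"
    and scaleR_scaleC: "scaleR r x = complex_of_real r *\<^sub>C x"
    and cinner_commute: "cinner x y = cnj (cinner y x)"
    and cinner_add_left: "cinner (x + y) z = cinner x z + cinner y z"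
    and cinner_scaleC_left: "cinner (a *\<^sub>C x) y = a * cinner x y"
    and cinner_self_real: "cinner x x = complex_of_real (Re (cinner x x))"
    and cinner_self_nonneg: "0 \<le> Re (cinner x x)"
    and norm_eq_sqrt_cinner: "norm x = sqrt (Re (cinner x x))"

class chilbert_space = complex_inner + complete_space

definition bounded_clinear :: "('a::complex_inner \<Rightarrow> 'b::complex_inner) \<Rightarrow> bool" where
  "bounded_clinear T \<longleftrightarrow> bounded_linear T \<and> (\<forall>c x. T (c *\<^sub>C x) = c *\<^sub>C T x)"

definition cadjoint :: "('a::complex_inner \<Rightarrow> 'b::complex_inner) \<Rightarrow> ('b \<Rightarrow> 'a)" where
  "cadjoint T = (THE S. \<forall>x y. cinner (T x) y = cinner x (S y))"

text \<open>Moore--Penrose pseudo-inverse of a bounded operator (with closed range):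
the unique bounded operator satisfying the four Penrose equations.\<close>
definition pinv :: "('a::complex_inner \<Rightarrow> 'a) \<Rightarrow> ('a \<Rightarrow> 'a)" where
  "pinv K = (THE L. bounded_clinear L
       \<and> (\<forall>x. K (L (K x)) = K x)
       \<and> (\<forall>x. L (K (L x)) = L x)
       \<and> (\<forall>x y. cinner (K (L x)) y = cinner x (K (L y)))
       \<and> (\<forall>x y. cinner (L (K x)) y = cinner x (L (K y))))"

definition weakly_measurable :: "'w measure \<Rightarrow> ('w \<Rightarrow> 'a::complex_inner) \<Rightarrow> bool" where
  "weakly_measurable M F \<longleftrightarrow> (\<forall>f. (\<lambda>\<omega>. cinner f (F \<omega>)) \<in> borel_measurable M)"

definition cont_bessel :: "'w measure \<Rightarrow> ('w \<Rightarrow> 'a::complex_inner) \<Rightarrow> bool" where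
  "cont_bessel M G \<longleftrightarrow> weakly_measurable M G \<and>
     (\<exists>B>0. \<forall>f. (\<integral>\<^sup>+\<omega>. ennreal ((cmod (cinner f (G \<omega>)))\<^sup>2) \<partial>M) \<le> ennreal (B * (norm f)\<^sup>2))"

definition parseval_cont_K_frame ::
    "'w measure \<Rightarrow> ('a::complex_inner \<Rightarrow> 'a) \<Rightarrow> ('w \<Rightarrow> 'a) \<Rightarrow> bool" where
  "parseval_cont_K_frame M K F \<longleftrightarrow> weakly_measurable M F \<and>
     (\<forall>f. (\<integral>\<^sup>+\<omega>. ennreal ((cmod (cinner f (F \<omega>)))\<^sup>2) \<partial>M) = ennreal ((norm (cadjoint K f))\<^sup>2))"

text \<open>Weak (Pettis-type) integral: \<open>x = \<integral> \<phi>(\<omega>) E(\<omega>) d\<mu>(\<omega>)\<close> in the weak sense.\<close>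
definition weak_integral_is ::
    "'w measure \<Rightarrow> ('w \<Rightarrow> complex) \<Rightarrow> ('w \<Rightarrow> 'a::complex_inner) \<Rightarrow> 'a \<Rightarrow> bool" where
  "weak_integral_is M \<phi> E x \<longleftrightarrow>
     (\<forall>g. integrable M (\<lambda>\<omega>. cinner (\<phi> \<omega> *\<^sub>C E \<omega>) g)
        \<and> (\<integral>\<omega>. cinner (\<phi> \<omega> *\<^sub>C E \<omega>) g \<partial>M) = cinner x g)"

definition dual_cont_bessel ::
    "'w measure \<Rightarrow> ('a::complex_inner \<Rightarrow> 'a) \<Rightarrow> ('w \<Rightarrow> 'a) \<Rightarrow> ('w \<Rightarrow> 'a) \<Rightarrow> bool" where
  "dual_cont_bessel M L E G \<longleftrightarrow> cont_bessel M G \<and>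
     (\<forall>f. weak_integral_is M (\<lambda>\<omega>. cinner f (G \<omega>)) E (L f))"

definition unique_dual_cont_bessel ::
    "'w measure \<Rightarrow> ('a::complex_inner \<Rightarrow> 'a) \<Rightarrow> ('w \<Rightarrow> 'a) \<Rightarrow> bool" where
  "unique_dual_cont_bessel M L E \<longleftrightarrow> (\<exists>G. dual_cont_bessel M L E G) \<and>
     (\<forall>G1 G2. dual_cont_bessel M L E G1 \<and> dual_cont_bessel M L E G2
        \<longrightarrow> (AE \<omega> in M. G1 \<omega> = G2 \<omega>))"

definition L2_fun :: "'w measure \<Rightarrow> ('w \<Rightarrow> complex) \<Rightarrow> bool" where
  "L2_fun M \<phi> \<longleftrightarrow> \<phi> \<in> borel_measurable M \<and> integrable M (\<lambda>\<omega>. (cmod (\<phi> \<omega>))\<^sup>2)"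

definition cont_L2_independent :: "'w measure \<Rightarrow> ('w \<Rightarrow> 'a::complex_inner) \<Rightarrow> bool" where
  "cont_L2_independent M E \<longleftrightarrow>
     (\<forall>\<phi>. L2_fun M \<phi> \<and> weak_integral_is M \<phi> E 0 \<longrightarrow> (AE \<omega> in M. \<phi> \<omega> = 0))"

end

theory Submission
  imports Defs
begin



lemma cinner_zero_left[simp]: "cinner 0 x = 0"
  using cinner_add_left[of 0 0 x] by simp

lemma cinner_minus_left: "cinner (- x) y = - cinner x y"
  by (metis cinner_add_left cinner_zero_left right_minus minus_unique)

lemma cinner_diff_left: "cinner (x - y) z = cinner x z - cinner y z"
  using cinner_add_left[of x "-y" z] by (simp add: cinner_minus_left)

lemma cinner_add_right: "cinner x (y + z) = cinner x y + cinner x z"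
  using cinner_commute[of x "y+z"] cinner_commute[of x y] cinner_commute[of x z]
  by (simp add: cinner_add_left)

lemma cinner_zero_right[simp]: "cinner x 0 = 0"
  using cinner_commute[of x 0] by simp

lemma cinner_minus_right: "cinner x (- y) = - cinner x y"
  using cinner_commute[of x "-y"] cinner_commute[of x y] by (simp add: cinner_minus_left)

lemma cinner_diff_right: "cinner x (y - z) = cinner x y - cinner x z"
  using cinner_commute[of x "y-z"] cinner_commute[of x y] cinner_commute[of x z]
  by (simp add: cinner_diff_left)


lemma cinner_scaleC_right': "cinner x (a *\<^sub>C y) = cnj a * cinner x y"
  using cinner_commute[of x "a *\<^sub>C y"] cinner_commute[of x y] by (simp add: cinner_scaleC_left)

lemma cinner_self: "cinner x x = complex_of_real ((norm x)\<^sup>2)"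
  using cinner_self_real[of x] norm_eq_sqrt_cinner[of x] cinner_self_nonneg[of x] by simp

lemma cinner_self_eq_0: "cinner x x = 0 \<longleftrightarrow> x = 0"
  by (simp add: cinner_self)

lemma scaleC_zero_left[simp]: "0 *\<^sub>C x = 0"
  using scaleR_scaleC[of 0 x] by simp

lemma scaleC_zero_right[simp]: "a *\<^sub>C 0 = 0"
  using scaleC_add_right[of a 0 0] by simp

lemma scaleC_minus_right: "a *\<^sub>C (- x) = - (a *\<^sub>C x)"
  using scaleC_add_right[of a x "-x"] by (simp add: add_eq_0_iff)

lemma scaleC_diff_right: "a *\<^sub>C (x - y) = a *\<^sub>C x - a *\<^sub>C y"
  using scaleC_add_right[of a x "-y"] by (simp add: scaleC_minus_right)

lemma scaleC_minus_left: "(- a) *\<^sub>C x = - (a *\<^sub>C x)"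
  using scaleC_add_left[of a "-a" x] by (simp add: add_eq_0_iff)

lemma scaleC_diff_left: "(a - b) *\<^sub>C x = a *\<^sub>C x - b *\<^sub>C x"
  using scaleC_add_left[of a "-b" x] by (simp add: scaleC_minus_left)

lemma cinner_eqI: "(\<And>z. cinner x z = cinner y z) \<Longrightarrow> x = y"
  by (metis cinner_diff_left cinner_self_eq_0 right_minus_eq)

lemma cinner_eqI': "(\<And>z. cinner z x = cinner z y) \<Longrightarrow> x = y"
  by (metis cinner_commute cinner_eqI)

lemma norm_sq_expand: "(norm (x + c *\<^sub>C y))\<^sup>2 = (norm x)\<^sup>2 + 2 * Re (cnj c * cinner x y) + (cmod c)\<^sup>2 * (norm y)\<^sup>2"
proof -
  have "complex_of_real ((norm (x + c *\<^sub>C y))\<^sup>2) = cinner (x + c *\<^sub>C y) (x + c *\<^sub>C y)"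
    by (simp add: cinner_self)
  also have "\<dots> = cinner x x + cnj c * cinner x y + c * cinner y x + c * cnj c * cinner y y"
    by (simp add: cinner_add_left cinner_add_right cinner_scaleC_left cinner_scaleC_right' algebra_simps)
  also have "\<dots> = cinner x x + (cnj c * cinner x y + cnj (cnj c * cinner x y)) + c * cnj c * cinner y y"
    by (simp add: cinner_commute[of y x])
  also have "\<dots> = complex_of_real ((norm x)\<^sup>2 + 2 * Re (cnj c * cinner x y) + (cmod c)\<^sup>2 * (norm y)\<^sup>2)"
  proof -
    have 1: "cnj c * cinner x y + cnj (cnj c * cinner x y) = complex_of_real (2 * Re (cnj c * cinner x y))"
      by (simp only: complex_add_cnj)
    have 2: "c * cnj c = complex_of_real ((cmod c)\<^sup>2)"
      by (simp only: complex_norm_square)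
    show ?thesis unfolding 1 2 cinner_self by (simp only: of_real_add of_real_mult)
  qed
  finally show ?thesis by (simp only: of_real_eq_iff)
qed

lemma norm_scaleC: "norm (c *\<^sub>C x) = cmod c * norm x"
proof -
  have "(norm (c *\<^sub>C x))\<^sup>2 = (cmod c * norm x)\<^sup>2"
    using norm_sq_expand[of 0 c x] by (simp add: power_mult_distrib)
  then show ?thesis by (simp add: power2_eq_iff_nonneg)
qed

lemma Cauchy_Schwarz: "cmod (cinner x y) \<le> norm x * norm y"
proof (cases "y = 0")
  case True then show ?thesis by simp
next
  case False
  then have ny: "norm y > 0" by simp
  define c where "c = - (cinner x y / complex_of_real ((norm y)\<^sup>2))"
  have "0 \<le> (norm (x + c *\<^sub>C y))\<^sup>2" by simp
  also have "\<dots> = (norm x)\<^sup>2 - (cmod (cinner x y))\<^sup>2 / (norm y)\<^sup>2"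
  proof -
    let ?z = "cinner x y" and ?n = "(norm y)\<^sup>2"
    have h1: "cnj c * ?z = - complex_of_real ((cmod ?z)\<^sup>2 / ?n)"
      unfolding c_def by (simp add: complex_norm_square[symmetric] mult.commute)
    have h2: "cmod c = cmod ?z / ?n"
      unfolding c_def by (simp add: norm_divide norm_power)
    show ?thesis unfolding norm_sq_expand h1 h2 using ny
      by (simp add: field_simps power2_eq_square)
  qed
  finally have "(cmod (cinner x y))\<^sup>2 / (norm y)\<^sup>2 \<le> (norm x)\<^sup>2" by linarith
  then have "(cmod (cinner x y))\<^sup>2 \<le> (norm x)\<^sup>2 * (norm y)\<^sup>2"
    using ny by (simp add: divide_le_eq)
  then have "(cmod (cinner x y))\<^sup>2 \<le> (norm x * norm y)\<^sup>2"
    by (simp add: power_mult_distrib)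
  then show ?thesis
    by (rule power2_le_imp_le) simp
qed
lemma norm_sq_add: "(norm (x + y))\<^sup>2 = (norm x)\<^sup>2 + 2 * Re (cinner x y) + (norm y)\<^sup>2"
  using norm_sq_expand[of x 1 y] by (simp add: scaleC_one)

lemma scaleC_minus_one: "(-1) *\<^sub>C x = - x"
  by (simp add: scaleC_minus_left scaleC_one)

lemma norm_sq_diff: "(norm (x - y))\<^sup>2 = (norm x)\<^sup>2 - 2 * Re (cinner x y) + (norm y)\<^sup>2"
  using norm_sq_expand[of x "-1" y] by (simp add: scaleC_minus_one)

lemma parallelogram: fixes x y :: "'a::complex_inner" shows "(norm (x + y))\<^sup>2 + (norm (x - y))\<^sup>2 = 2 * (norm x)\<^sup>2 + 2 * (norm y)\<^sup>2"
  by (simp add: norm_sq_add norm_sq_diff)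

lemma pythagoras: "cinner x y = 0 \<Longrightarrow> (norm (x + y))\<^sup>2 = (norm x)\<^sup>2 + (norm y)\<^sup>2"
  by (simp add: norm_sq_add)

definition csubspace :: "'a::complex_inner set \<Rightarrow> bool" where
  "csubspace V \<longleftrightarrow> 0 \<in> V \<and> (\<forall>x\<in>V. \<forall>y\<in>V. x + y \<in> V) \<and> (\<forall>c. \<forall>x\<in>V. c *\<^sub>C x \<in> V)"

lemma csubspace_0: "csubspace V \<Longrightarrow> 0 \<in> V"
  by (simp add: csubspace_def)
lemma csubspace_add: "csubspace V \<Longrightarrow> x \<in> V \<Longrightarrow> y \<in> V \<Longrightarrow> x + y \<in> V"
  by (simp add: csubspace_def)
lemma csubspace_scaleC: "csubspace V \<Longrightarrow> x \<in> V \<Longrightarrow> c *\<^sub>C x \<in> V"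
  by (simp add: csubspace_def)
lemma csubspace_minus: "csubspace V \<Longrightarrow> x \<in> V \<Longrightarrow> - x \<in> V"
  by (metis csubspace_scaleC scaleC_minus_one)
lemma csubspace_diff: "csubspace V \<Longrightarrow> x \<in> V \<Longrightarrow> y \<in> V \<Longrightarrow> x - y \<in> V"
  by (metis csubspace_add csubspace_minus diff_conv_add_uminus)
lemma csubspace_scaleR: "csubspace V \<Longrightarrow> x \<in> V \<Longrightarrow> r *\<^sub>R x \<in> V"
  by (simp add: csubspace_scaleC scaleR_scaleC)

lemma orth_from_min:
  assumes min: "\<And>c. (norm z)\<^sup>2 \<le> (norm (z - c *\<^sub>C v))\<^sup>2"
  shows "cinner z v = 0"
proof (cases "v = 0")
  case True then show ?thesis by simp
next
  case False
  then have nv: "norm v > 0" by simp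
  define c where "c = cinner z v / complex_of_real ((norm v)\<^sup>2)"
  have "z - c *\<^sub>C v = z + (- c) *\<^sub>C v" by (simp add: scaleC_minus_left)
  then have "(norm (z - c *\<^sub>C v))\<^sup>2 = (norm z)\<^sup>2 + 2 * Re (cnj (- c) * cinner z v) + (cmod (-c))\<^sup>2 * (norm v)\<^sup>2"
    by (simp only: norm_sq_expand)
  also have "\<dots> = (norm z)\<^sup>2 - (cmod (cinner z v))\<^sup>2 / (norm v)\<^sup>2"
  proof -
    let ?z = "cinner z v" and ?n = "(norm v)\<^sup>2"
    have h1: "cnj (- c) * ?z = - complex_of_real ((cmod ?z)\<^sup>2 / ?n)"
      unfolding c_def by (simp add: complex_norm_square[symmetric] mult.commute)
    have h2: "cmod (- c) = cmod ?z / ?n"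
      unfolding c_def by (simp add: norm_divide norm_power)
    show ?thesis unfolding h1 h2 using nv
      by (simp add: field_simps power2_eq_square)
  qed
  finally have "(cmod (cinner z v))\<^sup>2 / (norm v)\<^sup>2 \<le> 0"
    using min[of c] by linarith
  then have "(cmod (cinner z v))\<^sup>2 \<le> 0" using nv
    by (simp add: divide_le_0_iff)
  then show ?thesis by simp
qed

lemma proj_exists:
  fixes V :: "'a::chilbert_space set"
  assumes V: "csubspace V" "closed V"
  shows "\<exists>p\<in>V. \<forall>v\<in>V. cinner (y - p) v = 0"
proof -
  define D where "D = Inf ((\<lambda>v. (norm (y - v))\<^sup>2) ` V)"
  have ne: "(\<lambda>v. (norm (y - v))\<^sup>2) ` V \<noteq> {}" using csubspace_0[OF V(1)] by blast
  have bdd: "bdd_below ((\<lambda>v. (norm (y - v))\<^sup>2) ` V)"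
    by (rule bdd_belowI[of _ 0]) auto
  have Dle: "D \<le> (norm (y - w))\<^sup>2" if "w \<in> V" for w
    unfolding D_def using bdd that by (rule cINF_lower)
  have "\<exists>v\<in>V. (norm (y - v))\<^sup>2 < D + 1 / real (Suc n)" for n
  proof -
    have "Inf ((\<lambda>v. (norm (y - v))\<^sup>2) ` V) < D + 1 / real (Suc n)"
      unfolding D_def[symmetric] by simp
    from cInf_lessD[OF ne this] show ?thesis by blast
  qed
  then obtain vs where vsV: "\<And>n. vs n \<in> V"
    and vsD: "\<And>n. (norm (y - vs n))\<^sup>2 < D + 1 / real (Suc n)"
    by metis
  have dist_bound: "(norm (vs m - vs n))\<^sup>2 \<le> 2 / real (Suc m) + 2 / real (Suc n)" for m n
  proof -
    have mid: "(1/2::real) *\<^sub>R (vs m + vs n) \<in> V"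
      by (intro csubspace_scaleR csubspace_add V vsV)
    have "(norm ((y - vs m) + (y - vs n)))\<^sup>2 + (norm ((y - vs m) - (y - vs n)))\<^sup>2
        = 2 * (norm (y - vs m))\<^sup>2 + 2 * (norm (y - vs n))\<^sup>2"
      by (rule parallelogram)
    moreover have "(y - vs m) + (y - vs n) = 2 *\<^sub>R (y - (1/2::real) *\<^sub>R (vs m + vs n))"
      by (simp add: algebra_simps scaleR_2)
    moreover have "(y - vs m) - (y - vs n) = vs n - vs m" by simp
    moreover have "norm (vs n - vs m) = norm (vs m - vs n)" by (rule norm_minus_commute)
    moreover have "D \<le> (norm (y - (1/2::real) *\<^sub>R (vs m + vs n)))\<^sup>2" using Dle[OF mid] .
    ultimately have "(norm (vs m - vs n))\<^sup>2 \<le> 2 * (norm (y - vs m))\<^sup>2 + 2 * (norm (y - vs n))\<^sup>2 - 4 * D"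
      by (simp add: power_mult_distrib)
    then show ?thesis using vsD[of m] vsD[of n] by linarith
  qed
  have "Cauchy vs"
  proof (rule metric_CauchyI)
    fix e :: real assume "e > 0"
    obtain N :: nat where N: "4 / e\<^sup>2 < real N"
      using reals_Archimedean2 by blast
    show "\<exists>M. \<forall>m\<ge>M. \<forall>n\<ge>M. dist (vs m) (vs n) < e"
    proof (intro exI allI impI)
      fix m n assume "N \<le> m" "N \<le> n"
      have e2: "e\<^sup>2 > 0" using \<open>e > 0\<close> by simp
      have "4 / e\<^sup>2 < real (Suc m)" "4 / e\<^sup>2 < real (Suc n)" using N \<open>N \<le> m\<close> \<open>N \<le> n\<close> by auto
      then have "2 / real (Suc m) < e\<^sup>2 / 2" "2 / real (Suc n) < e\<^sup>2 / 2"
        using e2 by (auto simp: field_simps)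
      then have "(norm (vs m - vs n))\<^sup>2 < e\<^sup>2" using dist_bound[of m n] by linarith
      then show "dist (vs m) (vs n) < e"
        using \<open>e > 0\<close> by (simp add: dist_norm power_less_imp_less_base)
    qed
  qed
  then obtain p where lim: "vs \<longlonglongrightarrow> p"
    using Cauchy_convergent_iff convergent_def by blast
  have pV: "p \<in> V"
    using V(2) vsV lim closed_sequentially by blast
  have "(\<lambda>n. (norm (y - vs n))\<^sup>2) \<longlonglongrightarrow> (norm (y - p))\<^sup>2"
    by (intro tendsto_intros lim)
  moreover have "(\<lambda>n. D + 1 / real (Suc n)) \<longlonglongrightarrow> D + 0"
    by (intro tendsto_intros LIMSEQ_Suc[OF lim_1_over_n])
  ultimately have pmin: "(norm (y - p))\<^sup>2 \<le> D"
    using vsD by (intro LIMSEQ_le[where X="\<lambda>n. (norm (y - vs n))\<^sup>2"]) (auto intro: less_imp_le)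
  have "\<forall>v\<in>V. cinner (y - p) v = 0"
  proof
    fix v assume vV: "v \<in> V"
    show "cinner (y - p) v = 0"
    proof (rule orth_from_min)
      fix c
      have "p + c *\<^sub>C v \<in> V" by (intro csubspace_add csubspace_scaleC V pV vV)
      then have "D \<le> (norm (y - (p + c *\<^sub>C v)))\<^sup>2" by (rule Dle)
      then show "(norm (y - p))\<^sup>2 \<le> (norm (y - p - c *\<^sub>C v))\<^sup>2"
        using pmin by (simp only: diff_diff_eq)
    qed
  qed
  with pV show ?thesis by blast
qed


definition proj :: "'a::complex_inner set \<Rightarrow> 'a \<Rightarrow> 'a" where
  "proj V y = (SOME p. p \<in> V \<and> (\<forall>v\<in>V. cinner (y - p) v = 0))"

lemma proj_unique:
  assumes V: "csubspace V" and p: "p \<in> V" "\<forall>v\<in>V. cinner (y - p) v = 0"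
    and q: "q \<in> V" "\<forall>v\<in>V. cinner (y - q) v = 0"
  shows "p = q"
proof -
  have d: "p - q \<in> V" using V p q csubspace_diff by blast
  have "cinner (p - q) (p - q) = cinner (y - q) (p - q) - cinner (y - p) (p - q)"
    by (simp add: cinner_diff_left)
  also have "\<dots> = 0" using p q d by simp
  finally show ?thesis by (simp add: cinner_self_eq_0)
qed

context
  fixes V :: "'a::chilbert_space set"
  assumes V: "csubspace V" "closed V"
begin

lemma proj_prop: "proj V y \<in> V \<and> (\<forall>v\<in>V. cinner (y - proj V y) v = 0)"
  unfolding proj_def
  by (rule someI_ex[of "\<lambda>p. p \<in> V \<and> (\<forall>v\<in>V. cinner (y - p) v = 0)"])
     (use proj_exists[OF V, of y] in blast)

lemma proj_in: "proj V y \<in> V"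
  using proj_prop by blast

lemma proj_orth: "v \<in> V \<Longrightarrow> cinner (y - proj V y) v = 0"
  using proj_prop by blast

lemma proj_eqI: "p \<in> V \<Longrightarrow> (\<And>v. v \<in> V \<Longrightarrow> cinner (y - p) v = 0) \<Longrightarrow> proj V y = p"
  using proj_unique[OF V(1)] proj_in proj_orth by blast

lemma proj_id: "y \<in> V \<Longrightarrow> proj V y = y"
  by (rule proj_eqI) auto

lemma proj_add: "proj V (x + y) = proj V x + proj V y"
proof (rule proj_eqI)
  show "proj V x + proj V y \<in> V" using V(1) proj_in csubspace_add by blast
  fix v assume "v \<in> V"
  have "cinner (x + y - (proj V x + proj V y)) v = cinner (x - proj V x) v + cinner (y - proj V y) v"
    by (metis add_diff_add cinner_add_left)
  also have "\<dots> = 0" using proj_orth[OF \<open>v \<in> V\<close>] by simp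
  finally show "cinner (x + y - (proj V x + proj V y)) v = 0" .
qed

lemma proj_scaleC: "proj V (c *\<^sub>C x) = c *\<^sub>C proj V x"
proof (rule proj_eqI)
  show "c *\<^sub>C proj V x \<in> V" using V(1) proj_in csubspace_scaleC by blast
  fix v assume "v \<in> V"
  have "c *\<^sub>C x - c *\<^sub>C proj V x = c *\<^sub>C (x - proj V x)" by (simp add: scaleC_diff_right)
  then show "cinner (c *\<^sub>C x - c *\<^sub>C proj V x) v = 0"
    using proj_orth[OF \<open>v \<in> V\<close>] by (simp add: cinner_scaleC_left)
qed

lemma proj_sa: "cinner (proj V x) y = cinner x (proj V y)"
proof -
  have 1: "cinner (proj V x) y = cinner (proj V x) (proj V y)"
  proof -
    have "cinner (y - proj V y) (proj V x) = 0" using proj_orth proj_in by blast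
    then have "cinner (proj V x) (y - proj V y) = 0"
      using cinner_commute[of "proj V x" "y - proj V y"] by simp
    then show ?thesis by (simp add: cinner_diff_right)
  qed
  have 2: "cinner x (proj V y) = cinner (proj V x) (proj V y)"
  proof -
    have "cinner (x - proj V x) (proj V y) = 0" using proj_orth proj_in by blast
    then show ?thesis by (simp add: cinner_diff_left)
  qed
  show ?thesis using 1 2 by simp
qed

lemma proj_pyth: "(norm y)\<^sup>2 = (norm (proj V y))\<^sup>2 + (norm (y - proj V y))\<^sup>2"
proof -
  have "cinner (y - proj V y) (proj V y) = 0" using proj_orth proj_in by blast
  then have "cinner (proj V y) (y - proj V y) = 0"
    using cinner_commute[of "proj V y" "y - proj V y"] by simp
  then have "(norm (proj V y + (y - proj V y)))\<^sup>2 = (norm (proj V y))\<^sup>2 + (norm (y - proj V y))\<^sup>2"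
    by (rule pythagoras)
  moreover have "proj V y + (y - proj V y) = y" by (metis add.commute diff_add_cancel)
  ultimately show ?thesis by simp
qed

lemma proj_norm: "norm (proj V y) \<le> norm y"
proof -
  have "(norm (proj V y))\<^sup>2 \<le> (norm y)\<^sup>2" using proj_pyth[of y] zero_le_power2[of "norm (y - proj V y)"] by linarith
  then show ?thesis by (rule power2_le_imp_le) (rule norm_ge_zero)
qed

lemma proj_perp_norm: "norm (y - proj V y) \<le> norm y"
proof -
  have "(norm (y - proj V y))\<^sup>2 \<le> (norm y)\<^sup>2" using proj_pyth[of y] zero_le_power2[of "norm (proj V y)"] by linarith
  then show ?thesis by (rule power2_le_imp_le) (rule norm_ge_zero)
qed

end

lemma riesz:
  fixes f :: "'a::chilbert_space \<Rightarrow> complex"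
  assumes add: "\<And>x y. f (x + y) = f x + f y"
    and hom: "\<And>c x. f (c *\<^sub>C x) = c * f x"
    and bnd: "\<And>x. cmod (f x) \<le> B * norm x"
  shows "\<exists>w. \<forall>x. f x = cinner x w"
proof (cases "\<forall>x. f x = 0")
  case True
  then show ?thesis by (intro exI[of _ 0]) simp
next
  case False
  then obtain z where fz: "f z \<noteq> 0" by blast
  have f0: "f 0 = 0" using hom[of 0 0] by simp
  have fdiff: "f (x - y) = f x - f y" for x y
    using add[of "x - y" y] by simp
  define N where "N = {x. f x = 0}"
  have sN: "csubspace N" unfolding N_def csubspace_def using f0 add hom by auto
  have bl: "bounded_linear f"
  proof (rule bounded_linear_intro[where K="max B 0"])
    show "f (x + y) = f x + f y" for x y by (rule add)
    show "f (r *\<^sub>R x) = r *\<^sub>R f x" for r x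
      using hom[of "complex_of_real r" x] by (simp add: scaleR_scaleC scaleR_conv_of_real)
    show "norm (f x) \<le> norm x * max B 0" for x
    proof -
      have "B * norm x \<le> max B 0 * norm x" by (intro mult_right_mono) auto
      then show ?thesis using bnd[of x] by (simp add: mult.commute)
    qed
  qed
  have cN: "closed N"
    unfolding N_def using bl
    by (intro closed_Collect_eq continuous_on_const linear_continuous_on) auto
  define u where "u = z - proj N z"
  have fu: "f u = f z"
    using proj_in[OF sN cN, of z] by (simp add: u_def fdiff N_def)
  have uorth: "\<And>n. n \<in> N \<Longrightarrow> cinner u n = 0"
    unfolding u_def by (rule proj_orth[OF sN cN])
  have u0: "u \<noteq> 0" using fu fz f0 by auto
  then have nu: "norm u > 0" by simp
  define w where "w = (cnj (f u) / complex_of_real ((norm u)\<^sup>2)) *\<^sub>C u"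
  show ?thesis
  proof (intro exI allI)
    fix x
    have xN: "x - (f x / f u) *\<^sub>C u \<in> N"
      using fz fu by (simp add: N_def fdiff hom)
    have "cinner (x - (f x / f u) *\<^sub>C u) u = 0"
      using uorth[OF xN] cinner_commute[of "x - (f x / f u) *\<^sub>C u" u] by simp
    then have "cinner x u = (f x / f u) * complex_of_real ((norm u)\<^sup>2)"
      by (simp add: cinner_diff_left cinner_scaleC_left cinner_self)
    then show "f x = cinner x w"
      unfolding w_def using fz fu nu by (simp add: cinner_scaleC_right' field_simps)
  qed
qed


lemma bcl_intro:
  assumes "\<And>x y. f (x + y) = f x + f y" "\<And>c x. f (c *\<^sub>C x) = c *\<^sub>C f x"
    "\<And>x. norm (f x) \<le> norm x * B"
  shows "bounded_clinear f"
  unfolding bounded_clinear_def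
proof
  show "bounded_linear f"
  proof (rule bounded_linear_intro[where K=B])
    show "f (r *\<^sub>R x) = r *\<^sub>R f x" for r x using assms(2) by (simp add: scaleR_scaleC)
  qed (use assms in auto)
qed (use assms in auto)

lemma bcl_bl: "bounded_clinear T \<Longrightarrow> bounded_linear T"
  by (simp add: bounded_clinear_def)
lemma bcl_scaleC: "bounded_clinear T \<Longrightarrow> T (c *\<^sub>C x) = c *\<^sub>C T x"
  by (simp add: bounded_clinear_def)
lemma bcl_add: "bounded_clinear T \<Longrightarrow> T (x + y) = T x + T y"
  by (rule linear_simps(1)[OF bcl_bl])
lemma bcl_diff: "bounded_clinear T \<Longrightarrow> T (x - y) = T x - T y"
  by (rule linear_simps(2)[OF bcl_bl])
lemma bcl_zero: "bounded_clinear T \<Longrightarrow> T 0 = 0"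
  by (rule linear_simps(3)[OF bcl_bl])
lemma bcl_minus: "bounded_clinear T \<Longrightarrow> T (- x) = - T x"
  by (rule linear_simps(4)[OF bcl_bl])
lemma bcl_scaleR: "bounded_clinear T \<Longrightarrow> T (r *\<^sub>R x) = r *\<^sub>R T x"
  by (rule linear_simps(5)[OF bcl_bl])
lemma bcl_bound: "bounded_clinear T \<Longrightarrow> \<exists>B>0. \<forall>x. norm (T x) \<le> norm x * B"
  using bounded_linear.pos_bounded[OF bcl_bl] by blast

lemma adjoint_exists:
  fixes T :: "'a::chilbert_space \<Rightarrow> 'b::complex_inner"
  assumes T: "bounded_clinear T"
  shows "\<exists>S. \<forall>x y. cinner (T x) y = cinner x (S y)"
proof -
  obtain B where B: "B > 0" "\<And>x. norm (T x) \<le> norm x * B" using bcl_bound[OF T] by blast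
  have "\<exists>w. \<forall>x. cinner (T x) y = cinner x w" for y
  proof (rule riesz[where B="B * norm y"])
    show "cinner (T (x + z)) y = cinner (T x) y + cinner (T z) y" for x z
      by (simp add: bcl_add[OF T] cinner_add_left)
    show "cinner (T (c *\<^sub>C x)) y = c * cinner (T x) y" for c x
      by (simp add: bcl_scaleC[OF T] cinner_scaleC_left)
    show "cmod (cinner (T x) y) \<le> B * norm y * norm x" for x
    proof -
      have "cmod (cinner (T x) y) \<le> norm (T x) * norm y" by (rule Cauchy_Schwarz)
      also have "\<dots> \<le> norm x * B * norm y" by (intro mult_right_mono B) simp
      finally show ?thesis by (simp add: ac_simps)
    qed
  qed
  then show ?thesis by metis
qed

lemma cadjoint_eq:
  fixes T :: "'a::chilbert_space \<Rightarrow> 'b::complex_inner"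
  assumes T: "bounded_clinear T"
  shows "cinner (T x) y = cinner x (cadjoint T y)"
proof -
  have ex1: "\<exists>!S. \<forall>x y. cinner (T x) y = cinner x (S y)"
  proof (rule ex_ex1I)
    show "\<exists>S. \<forall>x y. cinner (T x) y = cinner x (S y)" by (rule adjoint_exists[OF T])
    fix S1 S2 assume "\<forall>x y. cinner (T x) y = cinner x (S1 y)" "\<forall>x y. cinner (T x) y = cinner x (S2 y)"
    then show "S1 = S2" by (intro ext cinner_eqI') metis
  qed
  show ?thesis
    unfolding cadjoint_def using theI'[OF ex1] by blast
qed

lemma cadjoint_bcl:
  fixes T :: "'a::chilbert_space \<Rightarrow> 'a"
  assumes T: "bounded_clinear T"
  shows "bounded_clinear (cadjoint T)"
proof -
  obtain B where B: "B > 0" "\<And>x. norm (T x) \<le> norm x * B" using bcl_bound[OF T] by blast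
  let ?A = "cadjoint T"
  show ?thesis
  proof (rule bcl_intro[where B=B])
    show "?A (x + y) = ?A x + ?A y" for x y
      by (rule cinner_eqI') (simp add: cadjoint_eq[OF T, symmetric] cinner_add_right)
    show "?A (c *\<^sub>C x) = c *\<^sub>C ?A x" for c x
      by (rule cinner_eqI') (simp add: cadjoint_eq[OF T, symmetric] cinner_scaleC_right')
    show "norm (?A y) \<le> norm y * B" for y
    proof -
      have "complex_of_real ((norm (?A y))\<^sup>2) = cinner (T (?A y)) y"
        by (simp add: cadjoint_eq[OF T] cinner_self)
      then have "(norm (?A y))\<^sup>2 = cmod (cinner (T (?A y)) y)"
        by (metis norm_of_real abs_power2 real_norm_def)
      also have "\<dots> \<le> norm (T (?A y)) * norm y" by (rule Cauchy_Schwarz)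
      also have "\<dots> \<le> norm (?A y) * B * norm y" by (intro mult_right_mono B) simp
      finally have *: "norm (?A y) * norm (?A y) \<le> norm (?A y) * (norm y * B)"
        by (simp add: power2_eq_square ac_simps)
      show ?thesis
      proof (cases "norm (?A y) = 0")
        case True then show ?thesis using B by simp
      next
        case False then have "norm (?A y) > 0" by simp
        with * show ?thesis by simp
      qed
    qed
  qed
qed


lemma om_baire:
  fixes K :: "'a::banach \<Rightarrow> 'b::banach"
  assumes bl: "bounded_linear K" and cl: "closed (range K)"
  shows "\<exists>n::nat. \<exists>y0\<in>range K. \<exists>e>0. \<forall>y\<in>range K. dist y y0 < e \<longrightarrow> y \<in> closure (K ` ball 0 (real n))"
proof -
  let ?R = "range K"
  let ?X = "top_of_set ?R"
  define T where "T n = ?R \<inter> closure (K ` ball 0 (real n))" for n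
  have cm: "completely_metrizable_space ?X"
    by (rule completely_metrizable_space_closedin[OF completely_metrizable_space_euclidean])
       (use cl closed_closedin in auto)
  have "\<exists>n. ?X interior_of T n \<noteq> {}"
  proof (rule ccontr)
    assume "\<not> ?thesis"
    then have allempty: "\<And>n. ?X interior_of T n = {}" by blast
    have "?X interior_of \<Union>(range T) = {}"
    proof (rule Baire_category_alt)
      show "completely_metrizable_space ?X \<or> locally_compact_space ?X \<and> regular_space ?X"
        using cm by blast
      show "countable (range T)" by simp
      fix S assume "S \<in> range T"
      then obtain n where "S = T n" by blast
      then show "closedin ?X S \<and> ?X interior_of S = {}"
        using allempty unfolding T_def by (auto intro: closedin_closed_Int)
    qed
    moreover have "\<Union>(range T) = ?R"
    proof
      show "\<Union>(range T) \<subseteq> ?R" unfolding T_def by blast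
      show "?R \<subseteq> \<Union>(range T)"
      proof
        fix y assume "y \<in> ?R"
        then obtain x where y: "y = K x" by blast
        obtain n :: nat where "norm x < real n" using reals_Archimedean2 by blast
        then have "x \<in> ball 0 (real n)" by simp
        then have "y \<in> K ` ball 0 (real n)" using y by (rule rev_image_eqI)
        then have "y \<in> closure (K ` ball 0 (real n))" by (rule subsetD[OF closure_subset])
        then have "y \<in> T n" unfolding T_def using \<open>y \<in> ?R\<close> by simp
        then show "y \<in> \<Union>(range T)" by (rule UN_I[rotated]) simp
      qed
    qed
    ultimately have "?X interior_of ?R = {}" by simp
    moreover have "?X interior_of ?R = ?R" using interior_of_topspace[of ?X] by simp
    ultimately show False by blast
  qed
  then obtain n y0 where "y0 \<in> ?X interior_of T n" by blast
  then obtain U where U: "openin ?X U" "y0 \<in> U" "U \<subseteq> T n"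
    unfolding interior_of_def by blast
  then obtain e where e: "e > 0" "\<And>y. y \<in> ?R \<Longrightarrow> dist y y0 < e \<Longrightarrow> y \<in> U"
    unfolding openin_euclidean_subtopology_iff by blast
  have "y0 \<in> ?R" using U openin_subset by fastforce
  show ?thesis
    using e U \<open>y0 \<in> ?R\<close> unfolding T_def by blast
qed


lemma om_step:
  fixes K :: "'a::banach \<Rightarrow> 'b::banach"
  assumes bl: "bounded_linear K" and cl: "closed (range K)"
  shows "\<exists>c\<ge>0. \<forall>y\<in>range K. \<exists>x. norm x \<le> c * norm y \<and> norm (y - K x) \<le> norm y / 2"
proof -
  interpret K: bounded_linear K by (rule bl)
  obtain n :: nat and y0 e where y0: "y0 \<in> range K" and e: "e > 0"
    and cov: "\<And>y. y \<in> range K \<Longrightarrow> dist y y0 < e \<Longrightarrow> y \<in> closure (K ` ball 0 (real n))"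
    using om_baire[OF bl cl] by blast
  have approx: "\<exists>x. norm x < 2 * real n \<and> norm (y - K x) < \<eta>"
    if y: "y \<in> range K" "norm y < e" and eta: "\<eta> > 0" for y \<eta>
  proof -
    have "y0 + y \<in> range K"
    proof -
      obtain a b where "y0 = K a" "y = K b" using y0 y by blast
      then have "y0 + y = K (a + b)" by (simp add: K.add)
      then show ?thesis by simp
    qed
    then have c1: "y0 + y \<in> closure (K ` ball 0 (real n))"
      using y by (intro cov) (simp_all add: dist_norm)
    have c2: "y0 \<in> closure (K ` ball 0 (real n))"
      using y0 e by (intro cov) simp_all
    obtain a where a: "a \<in> K ` ball 0 (real n)" "dist a (y0 + y) < \<eta> / 2"
      using c1 eta unfolding closure_approachable by (meson half_gt_zero)
    obtain b where b: "b \<in> K ` ball 0 (real n)" "dist b y0 < \<eta> / 2"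
      using c2 eta unfolding closure_approachable by (meson half_gt_zero)
    obtain xa where xa: "a = K xa" "norm xa < real n" using a(1) by auto
    obtain xb where xb: "b = K xb" "norm xb < real n" using b(1) by auto
    have "norm (xa - xb) \<le> norm xa + norm xb" by (rule norm_triangle_ineq4)
    then have n1: "norm (xa - xb) < 2 * real n" using xa xb by linarith
    have "y - K (xa - xb) = (y0 + y - K xa) - (y0 - K xb)" by (simp add: K.diff algebra_simps)
    then have "norm (y - K (xa - xb)) \<le> norm (y0 + y - K xa) + norm (y0 - K xb)"
      by (metis norm_triangle_ineq4)
    moreover have "norm (y0 + y - K xa) < \<eta> / 2" using a(2) xa by (simp add: dist_norm norm_minus_commute)
    moreover have "norm (y0 - K xb) < \<eta> / 2" using b(2) xb by (simp add: dist_norm norm_minus_commute)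
    ultimately have "norm (y - K (xa - xb)) < \<eta>" by linarith
    with n1 show ?thesis by blast
  qed
  define c where "c = 4 * real n / e"
  show ?thesis
  proof (rule exI[of _ c], intro conjI ballI)
    show "c \<ge> 0" using e by (simp add: c_def)
    fix y assume yR: "y \<in> range K"
    show "\<exists>x. norm x \<le> c * norm y \<and> norm (y - K x) \<le> norm y / 2"
    proof (cases "y = 0")
      case True
      then show ?thesis by (intro exI[of _ 0]) (simp add: K.zero)
    next
      case False
      then have ny: "norm y > 0" by simp
      define t where "t = e / (2 * norm y)"
      have t: "t > 0" using e ny by (simp add: t_def)
      have y'R: "t *\<^sub>R y \<in> range K"
      proof -
        obtain a where "y = K a" using yR by blast
        then have "t *\<^sub>R y = K (t *\<^sub>R a)" by (simp add: K.scaleR)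
        then show ?thesis by simp
      qed
      have ny': "norm (t *\<^sub>R y) = e / 2" using t ny e by (simp add: t_def)
      obtain x' where x': "norm x' < 2 * real n" "norm (t *\<^sub>R y - K x') < e / 4"
        using approx[OF y'R _, of "e/4"] ny' e by auto
      define x where "x = (1 / t) *\<^sub>R x'"
      have "norm x = norm x' / t" using t by (simp add: x_def)
      also have "\<dots> \<le> 2 * real n / t" using x'(1) t by (simp add: divide_right_mono)
      also have "\<dots> = c * norm y" using e ny by (simp add: t_def c_def field_simps)
      finally have nx: "norm x \<le> c * norm y" .
      have "y - K x = (1 / t) *\<^sub>R (t *\<^sub>R y - K x')"
        using t by (simp add: x_def K.scaleR algebra_simps)
      then have "norm (y - K x) = norm (t *\<^sub>R y - K x') / t" using t by simp
      also have "\<dots> \<le> (e / 4) / t" by (rule divide_right_mono) (use x'(2) t in auto)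
      also have "\<dots> = norm y / 2" using e ny by (simp add: t_def field_simps)
      finally show ?thesis using nx by blast
    qed
  qed
qed

lemma open_mapping_closed_range:
  fixes K :: "'a::banach \<Rightarrow> 'b::banach"
  assumes bl: "bounded_linear K" and cl: "closed (range K)"
  shows "\<exists>C. \<forall>y\<in>range K. \<exists>x. K x = y \<and> norm x \<le> C * norm y"
proof -
  interpret K: bounded_linear K by (rule bl)
  obtain c where c0: "c \<ge> 0" and c: "\<And>y. y \<in> range K \<Longrightarrow> \<exists>x. norm x \<le> c * norm y \<and> norm (y - K x) \<le> norm y / 2"
    using om_step[OF bl cl] by blast
  then have "\<forall>y\<in>range K. \<exists>x. norm x \<le> c * norm y \<and> norm (y - K x) \<le> norm y / 2" by blast
  from bchoice[OF this] obtain g where g0: "\<forall>y\<in>range K. norm (g y) \<le> c * norm y \<and> norm (y - K (g y)) \<le> norm y / 2"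
    by blast
  have g: "norm (g y) \<le> c * norm y \<and> norm (y - K (g y)) \<le> norm y / 2" if "y \<in> range K" for y
    using g0 that by blast
  have rK: "z - K (g z) \<in> range K" if zR: "z \<in> range K" for z
  proof -
    obtain a where "z = K a" using zR by blast
    then have "z - K (g z) = K (a - g z)" by (simp add: K.diff)
    then show ?thesis by simp
  qed
  show ?thesis
  proof (rule exI[of _ "2 * c"], intro ballI)
    fix y assume yR: "y \<in> range K"
    define ys where "ys k = ((\<lambda>z. z - K (g z)) ^^ k) y" for k
    have ys_Suc: "ys (Suc k) = ys k - K (g (ys k))" for k by (simp add: ys_def)
    have ysR: "ys k \<in> range K" for k
      by (induction k) (simp_all add: ys_def yR rK)
    have ysn: "norm (ys k) \<le> norm y * (1/2) ^ k" for k
    proof (induction k)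
      case 0 then show ?case by (simp add: ys_def)
    next
      case (Suc k)
      have "norm (ys (Suc k)) \<le> norm (ys k) / 2" using g[OF ysR[of k]] by (simp add: ys_Suc)
      also have "\<dots> \<le> norm y * (1/2) ^ k / 2" using Suc by simp
      finally show ?case by simp
    qed
    define xs where "xs k = g (ys k)" for k
    have xsn: "norm (xs k) \<le> c * norm y * (1/2) ^ k" for k
    proof -
      have "norm (xs k) \<le> c * norm (ys k)" using g[OF ysR[of k]] by (simp add: xs_def)
      also have "\<dots> \<le> c * (norm y * (1/2) ^ k)" using ysn[of k] c0 by (rule mult_left_mono)
      finally show ?thesis by (simp add: ac_simps)
    qed
    have sg: "summable (\<lambda>k. c * norm y * (1/2::real) ^ k)"
      by (intro summable_mult summable_geometric) simp
    have sn: "summable (\<lambda>k. norm (xs k))"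
      by (rule summable_comparison_test[OF _ sg]) (use xsn in auto)
    then have sx: "summable xs" by (rule summable_norm_cancel)
    have "norm (suminf xs) \<le> (\<Sum>k. norm (xs k))" by (rule summable_norm[OF sn])
    also have "\<dots> \<le> (\<Sum>k. c * norm y * (1/2::real) ^ k)"
      by (rule suminf_le[OF _ sn sg]) (rule xsn)
    also have "\<dots> = c * norm y * 2"
      by (simp add: suminf_mult suminf_geometric)
    finally have nb: "norm (suminf xs) \<le> (2 * c) * norm y" by simp
    have lim0: "(\<lambda>k. norm y * (1/2::real) ^ k) \<longlonglongrightarrow> 0"
      by (intro tendsto_mult_right_zero LIMSEQ_power_zero) simp
    have ys0: "ys \<longlonglongrightarrow> 0"
      by (rule Lim_null_comparison[OF always_eventually[OF allI[OF ysn]] lim0])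
    have "(\<lambda>k. K (xs k)) sums K (suminf xs)"
      by (rule K.sums) (rule summable_sums[OF sx])
    moreover have "(\<lambda>k. K (xs k)) = (\<lambda>k. ys k - ys (Suc k))"
      by (simp add: xs_def ys_Suc)
    moreover have "(\<lambda>k. ys k - ys (Suc k)) sums (ys 0 - 0)"
      by (rule telescope_sums'[OF ys0])
    ultimately have "(\<lambda>k. K (xs k)) sums (ys 0 - 0)" by simp
    then have "K (suminf xs) = ys 0 - 0"
      using \<open>(\<lambda>k. K (xs k)) sums K (suminf xs)\<close> sums_unique2 by blast
    then have "K (suminf xs) = y" by (simp add: ys_def)
    with nb show "\<exists>x. K x = y \<and> norm x \<le> 2 * c * norm y" by blast
  qed
qed


subclass (in chilbert_space) banach ..

lemma pinv_exists:
  fixes K :: "'a::chilbert_space \<Rightarrow> 'a"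
  assumes K: "bounded_clinear K" and cl: "closed (range K)"
  shows "\<exists>L. bounded_clinear L
       \<and> (\<forall>x. K (L (K x)) = K x)
       \<and> (\<forall>x. L (K (L x)) = L x)
       \<and> (\<forall>x y. cinner (K (L x)) y = cinner x (K (L y)))
       \<and> (\<forall>x y. cinner (L (K x)) y = cinner x (L (K y)))"
proof -
  let ?R = "range K" and ?N = "{x. K x = 0}"
  have sR: "csubspace ?R" unfolding csubspace_def
  proof (intro conjI ballI allI)
    show "0 \<in> ?R" using bcl_zero[OF K] by (metis rangeI)
    fix x y assume "x \<in> ?R" "y \<in> ?R"
    then obtain a b where "x = K a" "y = K b" by blast
    then show "x + y \<in> ?R" by (metis bcl_add[OF K] rangeI)
  next
    fix c x assume "x \<in> ?R"
    then obtain a where "x = K a" by blast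
    then show "c *\<^sub>C x \<in> ?R" by (metis bcl_scaleC[OF K] rangeI)
  qed
  have sN: "csubspace ?N" unfolding csubspace_def
    by (simp add: bcl_zero[OF K] bcl_add[OF K] bcl_scaleC[OF K])
  have cN: "closed ?N"
    using bcl_bl[OF K] by (intro closed_Collect_eq continuous_on_const linear_continuous_on) auto
  obtain C0 where C0: "\<And>y. y \<in> ?R \<Longrightarrow> \<exists>x. K x = y \<and> norm x \<le> C0 * norm y"
    using open_mapping_closed_range[OF bcl_bl[OF K] cl] by blast
  define C where "C = max C0 0"
  have Cpos: "C \<ge> 0" by (simp add: C_def)
  have C: "\<exists>x. K x = y \<and> norm x \<le> C * norm y" if yR: "y \<in> ?R" for y
  proof -
    obtain x where "K x = y" "norm x \<le> C0 * norm y" using C0[OF yR] by blast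
    moreover have "C0 * norm y \<le> C * norm y" by (intro mult_right_mono) (simp_all add: C_def)
    ultimately show ?thesis by force
  qed
  define PR where "PR = proj ?R"
  define PN where "PN = proj ?N"
  define Q where "Q x = x - PN x" for x
  have PR_in: "PR y \<in> ?R" for y unfolding PR_def by (rule proj_in[OF sR cl])
  have KQ: "K (Q x) = K x" for x
    using proj_in[OF sN cN, of x] by (simp add: Q_def PN_def bcl_diff[OF K])
  have Qorth: "n \<in> ?N \<Longrightarrow> cinner (Q x) n = 0" for x n
    unfolding Q_def PN_def by (rule proj_orth[OF sN cN])
  have uniq: "z1 = z2" if "K z1 = K z2" "\<And>n. n \<in> ?N \<Longrightarrow> cinner z1 n = 0"
      "\<And>n. n \<in> ?N \<Longrightarrow> cinner z2 n = 0" for z1 z2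
  proof -
    have d: "z1 - z2 \<in> ?N" using that(1) by (simp add: bcl_diff[OF K])
    have "cinner (z1 - z2) (z1 - z2) = 0"
      using that(2)[OF d] that(3)[OF d] by (simp add: cinner_diff_left)
    then show ?thesis by (simp add: cinner_self_eq_0)
  qed
  define L where "L y = Q (SOME x. K x = PR y)" for y
  have KL: "K (L y) = PR y" for y
  proof -
    have "\<exists>x. K x = PR y" using PR_in[of y] by (metis rangeE)
    then have "K (SOME x. K x = PR y) = PR y" by (rule someI_ex)
    then show ?thesis by (simp add: L_def KQ)
  qed
  have Lorth: "n \<in> ?N \<Longrightarrow> cinner (L y) n = 0" for y n
    unfolding L_def by (rule Qorth)
  have Lchar: "L y = z" if "K z = PR y" "\<And>n. n \<in> ?N \<Longrightarrow> cinner z n = 0" for y z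
    using uniq[of "L y" z] KL[of y] Lorth that by auto
  have Ladd: "L (x + y) = L x + L y" for x y
  proof (rule Lchar)
    show "K (L x + L y) = PR (x + y)"
      by (simp add: bcl_add[OF K] KL PR_def proj_add[OF sR cl])
    show "cinner (L x + L y) n = 0" if "n \<in> ?N" for n
      using Lorth[OF that] by (simp add: cinner_add_left)
  qed
  have LscaleC: "L (c *\<^sub>C x) = c *\<^sub>C L x" for c x
  proof (rule Lchar)
    show "K (c *\<^sub>C L x) = PR (c *\<^sub>C x)"
      by (simp add: bcl_scaleC[OF K] KL PR_def proj_scaleC[OF sR cl])
    show "cinner (c *\<^sub>C L x) n = 0" if "n \<in> ?N" for n
      using Lorth[OF that] by (simp add: cinner_scaleC_left)
  qed
  have Lbound: "norm (L y) \<le> norm y * C" for y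
  proof -
    obtain x where x: "K x = PR y" "norm x \<le> C * norm (PR y)" using C[OF PR_in[of y]] by blast
    have "L y = Q x" by (rule Lchar) (use x KQ Qorth in auto)
    then have "norm (L y) \<le> norm x"
      unfolding Q_def PN_def using proj_perp_norm[OF sN cN] by simp
    also have "\<dots> \<le> C * norm (PR y)" by (rule x(2))
    also have "\<dots> \<le> C * norm y"
      using proj_norm[OF sR cl, of y] Cpos unfolding PR_def by (rule mult_left_mono)
    finally show ?thesis by (simp add: ac_simps)
  qed
  have PRid: "PR z = z" if "z \<in> ?R" for z unfolding PR_def using that by (rule proj_id[OF sR cl])
  have LK: "L (K x) = Q x" for x
  proof (rule Lchar)
    show "K (Q x) = PR (K x)" using PRid[of "K x"] KQ by simp
  qed (rule Qorth)
  have Qsa: "cinner (Q x) y = cinner x (Q y)" for x y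
    unfolding Q_def PN_def by (simp add: cinner_diff_left cinner_diff_right proj_sa[OF sN cN])
  have LPR: "L (PR x) = L x" for x
  proof (rule Lchar)
    show "K (L x) = PR (PR x)" using KL PRid PR_in by simp
  qed (rule Lorth)
  show ?thesis
  proof (intro exI[of _ L] conjI allI)
    show "bounded_clinear L" by (rule bcl_intro[where B=C]) (simp_all add: Ladd LscaleC Lbound)
    show "K (L (K x)) = K x" for x using KL PRid by simp
    show "L (K (L x)) = L x" for x using KL LPR by simp
    show "cinner (K (L x)) y = cinner x (K (L y))" for x y
      using KL proj_sa[OF sR cl] unfolding PR_def by simp
    show "cinner (L (K x)) y = cinner x (L (K y))" for x y
      using LK Qsa by simp
  qed
qed

lemma pinv_unique:
  fixes K :: "'a::complex_inner \<Rightarrow> 'a"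
  assumes 1: "\<forall>x. K (L1 (K x)) = K x" "\<forall>x. L1 (K (L1 x)) = L1 x"
       "\<forall>x y. cinner (K (L1 x)) y = cinner x (K (L1 y))"
       "\<forall>x y. cinner (L1 (K x)) y = cinner x (L1 (K y))"
    and 2: "\<forall>x. K (L2 (K x)) = K x" "\<forall>x. L2 (K (L2 x)) = L2 x"
       "\<forall>x y. cinner (K (L2 x)) y = cinner x (K (L2 y))"
       "\<forall>x y. cinner (L2 (K x)) y = cinner x (L2 (K y))"
  shows "L1 = L2"
proof -
  have KL: "K (L1 x) = K (L2 x)" for x
  proof (rule cinner_eqI)
    fix y
    have "cinner (K (L1 x)) y = cinner (K (L2 (K (L1 x)))) y" using 2(1) by simp
    also have "\<dots> = cinner (K (L1 x)) (K (L2 y))" using 2(3) by simp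
    also have "\<dots> = cinner x (K (L1 (K (L2 y))))" using 1(3) by simp
    also have "\<dots> = cinner x (K (L2 y))" using 1(1) by simp
    also have "\<dots> = cinner (K (L2 x)) y" using 2(3) by simp
    finally show "cinner (K (L1 x)) y = cinner (K (L2 x)) y" .
  qed
  have LK: "L1 (K x) = L2 (K x)" for x
  proof (rule cinner_eqI)
    fix y
    have "cinner (L1 (K x)) y = cinner (L1 (K (L2 (K x)))) y" using 2(1) by simp
    also have "\<dots> = cinner (L2 (K x)) (L1 (K y))" using 1(4) by simp
    also have "\<dots> = cinner x (L2 (K (L1 (K y))))" using 2(4) by simp
    also have "\<dots> = cinner x (L2 (K y))" using 1(1) by simp
    also have "\<dots> = cinner (L2 (K x)) y" using 2(4) by simp
    finally show "cinner (L1 (K x)) y = cinner (L2 (K x)) y" .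
  qed
  show ?thesis
  proof
    fix y
    have "L1 y = L1 (K (L1 y))" using 1(2) by simp
    also have "\<dots> = L1 (K (L2 y))" using KL by simp
    also have "\<dots> = L2 (K (L2 y))" using LK by simp
    also have "\<dots> = L2 y" using 2(2) by simp
    finally show "L1 y = L2 y" .
  qed
qed

lemma pinv_props:
  fixes K :: "'a::chilbert_space \<Rightarrow> 'a"
  assumes K: "bounded_clinear K" and cl: "closed (range K)"
  shows "bounded_clinear (pinv K)
       \<and> (\<forall>x. K (pinv K (K x)) = K x)
       \<and> (\<forall>x. pinv K (K (pinv K x)) = pinv K x)
       \<and> (\<forall>x y. cinner (K (pinv K x)) y = cinner x (K (pinv K y)))
       \<and> (\<forall>x y. cinner (pinv K (K x)) y = cinner x (pinv K (K y)))"
proof -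
  have ex1: "\<exists>!L. bounded_clinear L
       \<and> (\<forall>x. K (L (K x)) = K x)
       \<and> (\<forall>x. L (K (L x)) = L x)
       \<and> (\<forall>x y. cinner (K (L x)) y = cinner x (K (L y)))
       \<and> (\<forall>x y. cinner (L (K x)) y = cinner x (L (K y)))"
  proof (rule ex_ex1I)
    show "\<exists>L. bounded_clinear L
       \<and> (\<forall>x. K (L (K x)) = K x)
       \<and> (\<forall>x. L (K (L x)) = L x)
       \<and> (\<forall>x y. cinner (K (L x)) y = cinner x (K (L y)))
       \<and> (\<forall>x y. cinner (L (K x)) y = cinner x (L (K y)))" by (rule pinv_exists[OF K cl])
  next
    fix L1 L2 assume "bounded_clinear L1
       \<and> (\<forall>x. K (L1 (K x)) = K x)
       \<and> (\<forall>x. L1 (K (L1 x)) = L1 x)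
       \<and> (\<forall>x y. cinner (K (L1 x)) y = cinner x (K (L1 y)))
       \<and> (\<forall>x y. cinner (L1 (K x)) y = cinner x (L1 (K y)))"
      "bounded_clinear L2
       \<and> (\<forall>x. K (L2 (K x)) = K x)
       \<and> (\<forall>x. L2 (K (L2 x)) = L2 x)
       \<and> (\<forall>x y. cinner (K (L2 x)) y = cinner x (K (L2 y)))
       \<and> (\<forall>x y. cinner (L2 (K x)) y = cinner x (L2 (K y)))"
    then show "L1 = L2" using pinv_unique[of K L1 L2] by blast
  qed
  show ?thesis unfolding pinv_def by (rule theI'[OF ex1])
qed


lemma wm_left: "weakly_measurable M F \<Longrightarrow> (\<lambda>\<omega>. cinner f (F \<omega>)) \<in> borel_measurable M"
  by (simp add: weakly_measurable_def)

lemma wm_right: "weakly_measurable M F \<Longrightarrow> (\<lambda>\<omega>. cinner (F \<omega>) g) \<in> borel_measurable M"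
proof -
  assume "weakly_measurable M F"
  then have [measurable]: "(\<lambda>\<omega>. cinner g (F \<omega>)) \<in> borel_measurable M" by (rule wm_left)
  have "(\<lambda>\<omega>. cnj (cinner g (F \<omega>))) \<in> borel_measurable M"
    by (rule borel_measurable_continuous_on[where f=cnj]) (simp_all add: continuous_on_cnj)
  moreover have "(\<lambda>\<omega>. cinner (F \<omega>) g) = (\<lambda>\<omega>. cnj (cinner g (F \<omega>)))"
    by (rule ext) (rule cinner_commute)
  ultimately show ?thesis by simp
qed

lemma sq_meas: "(a::'w \<Rightarrow> complex) \<in> borel_measurable M \<Longrightarrow> (\<lambda>\<omega>. (cmod (a \<omega>))\<^sup>2) \<in> borel_measurable M"
  by measurable

lemma bessel_integrable:
  assumes "cont_bessel M G"
  shows "integrable M (\<lambda>\<omega>. (cmod (cinner f (G \<omega>)))\<^sup>2)"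
proof -
  obtain B where B: "(\<integral>\<^sup>+\<omega>. ennreal ((cmod (cinner f (G \<omega>)))\<^sup>2) \<partial>M) \<le> ennreal (B * (norm f)\<^sup>2)"
    using assms unfolding cont_bessel_def by blast
  have m: "(\<lambda>\<omega>. cinner f (G \<omega>)) \<in> borel_measurable M"
    using assms unfolding cont_bessel_def by (simp add: wm_left)
  show ?thesis
  proof (rule integrableI_bounded)
    show "(\<lambda>\<omega>. (cmod (cinner f (G \<omega>)))\<^sup>2) \<in> borel_measurable M" by (rule sq_meas[OF m])
    show "(\<integral>\<^sup>+\<omega>. ennreal (norm ((cmod (cinner f (G \<omega>)))\<^sup>2)) \<partial>M) < \<infinity>"
      using B by (simp add: le_less_trans)
  qed
qed

lemma parseval_integral:
  assumes "parseval_cont_K_frame M K F"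
  shows "integrable M (\<lambda>\<omega>. (cmod (cinner f (F \<omega>)))\<^sup>2)
      \<and> (\<integral>\<omega>. (cmod (cinner f (F \<omega>)))\<^sup>2 \<partial>M) = (norm (cadjoint K f))\<^sup>2"
proof -
  have m: "(\<lambda>\<omega>. cinner f (F \<omega>)) \<in> borel_measurable M"
    using assms unfolding parseval_cont_K_frame_def by (simp add: wm_left)
  have e: "(\<integral>\<^sup>+\<omega>. ennreal ((cmod (cinner f (F \<omega>)))\<^sup>2) \<partial>M) = ennreal ((norm (cadjoint K f))\<^sup>2)"
    using assms unfolding parseval_cont_K_frame_def by blast
  show ?thesis
    using nn_integral_eq_integrable[OF sq_meas[OF m], of "(norm (cadjoint K f))\<^sup>2"] e by simp
qed

lemma L2_prod_integrable:
  fixes a b :: "'w \<Rightarrow> complex"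
  assumes "a \<in> borel_measurable M" "b \<in> borel_measurable M"
    "integrable M (\<lambda>\<omega>. (cmod (a \<omega>))\<^sup>2)" "integrable M (\<lambda>\<omega>. (cmod (b \<omega>))\<^sup>2)"
  shows "integrable M (\<lambda>\<omega>. a \<omega> * b \<omega>)"
proof (rule Bochner_Integration.integrable_bound)
  show "integrable M (\<lambda>\<omega>. (cmod (a \<omega>))\<^sup>2 + (cmod (b \<omega>))\<^sup>2)" using assms by simp
  show "(\<lambda>\<omega>. a \<omega> * b \<omega>) \<in> borel_measurable M" using assms by simp
  show "AE \<omega> in M. norm (a \<omega> * b \<omega>) \<le> norm ((cmod (a \<omega>))\<^sup>2 + (cmod (b \<omega>))\<^sup>2)"
  proof (rule AE_I2)
    fix \<omega>
    have "norm (a \<omega> * b \<omega>) = cmod (a \<omega>) * cmod (b \<omega>)" by (simp add: norm_mult)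
    also have "\<dots> \<le> (cmod (a \<omega>))\<^sup>2 + (cmod (b \<omega>))\<^sup>2"
    proof -
      have "2 * cmod (a \<omega>) * cmod (b \<omega>) \<le> (cmod (a \<omega>))\<^sup>2 + (cmod (b \<omega>))\<^sup>2"
        by (rule sum_squares_bound)
      moreover have "0 \<le> cmod (a \<omega>) * cmod (b \<omega>)" by simp
      ultimately show ?thesis by linarith
    qed
    finally show "norm (a \<omega> * b \<omega>) \<le> norm ((cmod (a \<omega>))\<^sup>2 + (cmod (b \<omega>))\<^sup>2)" by simp
  qed
qed

lemma dense_zero:
  fixes v :: "'a::complex_inner"
  assumes D: "\<And>X. open X \<Longrightarrow> X \<noteq> {} \<Longrightarrow> \<exists>d\<in>D. d \<in> X"
    and z: "\<And>d. d \<in> D \<Longrightarrow> cinner d v = 0"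
  shows "v = 0"
proof (rule ccontr)
  assume "v \<noteq> 0"
  then have nv: "norm v > 0" by simp
  obtain d where d: "d \<in> D" "d \<in> ball v (norm v / 2)"
    using D[of "ball v (norm v / 2)"] nv by auto
  have "complex_of_real ((norm v)\<^sup>2) = cinner v v" by (simp add: cinner_self)
  also have "\<dots> = cinner (v - d) v" using z[OF d(1)] by (simp add: cinner_diff_left)
  finally have "(norm v)\<^sup>2 = cmod (cinner (v - d) v)"
    by (metis norm_of_real abs_power2 real_norm_def)
  also have "\<dots> \<le> norm (v - d) * norm v" by (rule Cauchy_Schwarz)
  also have "\<dots> < (norm v / 2) * norm v"
    using d(2) nv by (intro mult_strict_right_mono) (simp_all add: dist_norm)
  finally show False using nv by (simp add: power2_eq_square)
qed


lemma polar_scalar: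
  fixes a b :: complex
  shows "a * cnj b = (1/4) * (complex_of_real ((cmod (a + b))\<^sup>2) - complex_of_real ((cmod (a - b))\<^sup>2)
     + \<i> * complex_of_real ((cmod (a + \<i> * b))\<^sup>2) - \<i> * complex_of_real ((cmod (a - \<i> * b))\<^sup>2))"
  unfolding cmod_power2 by (simp add: complex_eq_iff power2_eq_square algebra_simps)

lemma polar_inner:
  fixes x y :: "'a::complex_inner"
  shows "cinner x y = (1/4) * (complex_of_real ((norm (x + y))\<^sup>2) - complex_of_real ((norm (x - y))\<^sup>2)
     + \<i> * complex_of_real ((norm (x + \<i> *\<^sub>C y))\<^sup>2) - \<i> * complex_of_real ((norm (x - \<i> *\<^sub>C y))\<^sup>2))"
proof -
  have e1: "x - y = x + (-1) *\<^sub>C y" by (simp add: scaleC_minus_one)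
  have e2: "x - \<i> *\<^sub>C y = x + (-\<i>) *\<^sub>C y" by (simp add: scaleC_minus_left)
  have e3: "x + y = x + 1 *\<^sub>C y" by (simp add: scaleC_one)
  show ?thesis
    unfolding e1 e2 e3 norm_sq_expand
    by (simp add: complex_eq_iff algebra_simps)
qed

lemma sq_add_integrable:
  fixes a b :: "'w \<Rightarrow> complex"
  assumes "a \<in> borel_measurable M" "b \<in> borel_measurable M"
    "integrable M (\<lambda>\<omega>. (cmod (a \<omega>))\<^sup>2)" "integrable M (\<lambda>\<omega>. (cmod (b \<omega>))\<^sup>2)"
  shows "integrable M (\<lambda>\<omega>. (cmod (a \<omega> + b \<omega>))\<^sup>2)"
proof (rule Bochner_Integration.integrable_bound)
  show "integrable M (\<lambda>\<omega>. 2 * (cmod (a \<omega>))\<^sup>2 + 2 * (cmod (b \<omega>))\<^sup>2)" using assms by simp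
  show "(\<lambda>\<omega>. (cmod (a \<omega> + b \<omega>))\<^sup>2) \<in> borel_measurable M" using assms by simp
  show "AE \<omega> in M. norm ((cmod (a \<omega> + b \<omega>))\<^sup>2) \<le> norm (2 * (cmod (a \<omega>))\<^sup>2 + 2 * (cmod (b \<omega>))\<^sup>2)"
  proof (rule AE_I2)
    fix \<omega>
    let ?u = "cmod (a \<omega>)" and ?v = "cmod (b \<omega>)"
    have "cmod (a \<omega> + b \<omega>) \<le> ?u + ?v" by (rule norm_triangle_ineq)
    then have "(cmod (a \<omega> + b \<omega>))\<^sup>2 \<le> (?u + ?v)\<^sup>2" by (simp add: power_mono)
    also have "\<dots> \<le> 2 * ?u\<^sup>2 + 2 * ?v\<^sup>2"
      using sum_squares_bound[of ?u ?v] by (simp add: power2_sum)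
    finally show "norm ((cmod (a \<omega> + b \<omega>))\<^sup>2) \<le> norm (2 * (cmod (a \<omega>))\<^sup>2 + 2 * (cmod (b \<omega>))\<^sup>2)"
      by simp
  qed
qed

lemma sq_scale_integrable:
  fixes b :: "'w \<Rightarrow> complex"
  assumes "integrable M (\<lambda>\<omega>. (cmod (b \<omega>))\<^sup>2)"
  shows "integrable M (\<lambda>\<omega>. (cmod (c * b \<omega>))\<^sup>2)"
  using assms by (simp add: norm_mult power_mult_distrib)

lemma polar_integral:
  fixes a b :: "'w \<Rightarrow> complex"
  assumes ma: "a \<in> borel_measurable M" and mb: "b \<in> borel_measurable M"
    and ia: "integrable M (\<lambda>\<omega>. (cmod (a \<omega>))\<^sup>2)" and ib: "integrable M (\<lambda>\<omega>. (cmod (b \<omega>))\<^sup>2)"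
  shows "integrable M (\<lambda>\<omega>. a \<omega> * cnj (b \<omega>))"
    "(\<integral>\<omega>. a \<omega> * cnj (b \<omega>) \<partial>M) = (1/4) * (complex_of_real (\<integral>\<omega>. (cmod (a \<omega> + b \<omega>))\<^sup>2 \<partial>M)
       - complex_of_real (\<integral>\<omega>. (cmod (a \<omega> - b \<omega>))\<^sup>2 \<partial>M)
     + \<i> * complex_of_real (\<integral>\<omega>. (cmod (a \<omega> + \<i> * b \<omega>))\<^sup>2 \<partial>M)
     - \<i> * complex_of_real (\<integral>\<omega>. (cmod (a \<omega> - \<i> * b \<omega>))\<^sup>2 \<partial>M))" (is "_ = ?rhs")
proof -
  have mcb: "(\<lambda>\<omega>. cnj (b \<omega>)) \<in> borel_measurable M"
    by (rule borel_measurable_continuous_on[where f=cnj, OF _ mb]) (simp add: continuous_on_cnj)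
  show "integrable M (\<lambda>\<omega>. a \<omega> * cnj (b \<omega>))"
    by (rule L2_prod_integrable[OF ma mcb ia]) (use ib in simp)
  have mib: "(\<lambda>\<omega>. c * b \<omega>) \<in> borel_measurable M" for c using mb by simp
  have i1: "integrable M (\<lambda>\<omega>. (cmod (a \<omega> + b \<omega>))\<^sup>2)"
    by (rule sq_add_integrable[OF ma mb ia ib])
  have i2: "integrable M (\<lambda>\<omega>. (cmod (a \<omega> - b \<omega>))\<^sup>2)"
    using sq_add_integrable[OF ma mib[of "-1"] ia sq_scale_integrable[OF ib, of "-1"]] by simp
  have i3: "integrable M (\<lambda>\<omega>. (cmod (a \<omega> + \<i> * b \<omega>))\<^sup>2)"
    using sq_add_integrable[OF ma mib[of "\<i>"] ia sq_scale_integrable[OF ib, of "\<i>"]] by simp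
  have i4: "integrable M (\<lambda>\<omega>. (cmod (a \<omega> - \<i> * b \<omega>))\<^sup>2)"
    using sq_add_integrable[OF ma mib[of "-\<i>"] ia sq_scale_integrable[OF ib, of "-\<i>"]] by simp
  have "(\<integral>\<omega>. a \<omega> * cnj (b \<omega>) \<partial>M) = (\<integral>\<omega>. (1/4) * (complex_of_real ((cmod (a \<omega> + b \<omega>))\<^sup>2) - complex_of_real ((cmod (a \<omega> - b \<omega>))\<^sup>2)
     + \<i> * complex_of_real ((cmod (a \<omega> + \<i> * b \<omega>))\<^sup>2) - \<i> * complex_of_real ((cmod (a \<omega> - \<i> * b \<omega>))\<^sup>2)) \<partial>M)"
    by (rule Bochner_Integration.integral_cong[OF refl]) (rule polar_scalar)
  also have "\<dots> = ?rhs"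
  proof -
    have j1: "integrable M (\<lambda>\<omega>. complex_of_real ((cmod (a \<omega> + b \<omega>))\<^sup>2))" by (rule integrable_of_real[OF i1])
    have j2: "integrable M (\<lambda>\<omega>. complex_of_real ((cmod (a \<omega> - b \<omega>))\<^sup>2))" by (rule integrable_of_real[OF i2])
    have j3: "integrable M (\<lambda>\<omega>. complex_of_real ((cmod (a \<omega> + \<i> * b \<omega>))\<^sup>2))" by (rule integrable_of_real[OF i3])
    have j4: "integrable M (\<lambda>\<omega>. complex_of_real ((cmod (a \<omega> - \<i> * b \<omega>))\<^sup>2))" by (rule integrable_of_real[OF i4])
    show ?thesis using j1 j2 j3 j4 by (simp del: of_real_power)
  qed
  finally show "(\<integral>\<omega>. a \<omega> * cnj (b \<omega>) \<partial>M) = ?rhs" .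
qed


context
  fixes M :: "'w measure" and K :: "'h::{chilbert_space, second_countable_topology} \<Rightarrow> 'h"
    and F :: "'w \<Rightarrow> 'h"
  assumes K: "bounded_clinear K" and cl: "closed (range K)" and pf: "parseval_cont_K_frame M K F"
begin

lemma A_bcl: "bounded_clinear (cadjoint K)"
  by (rule cadjoint_bcl[OF K])

lemma adjK: "cinner (K x) y = cinner x (cadjoint K y)"
  by (rule cadjoint_eq[OF K])

lemma L_bcl: "bounded_clinear (pinv K)"
  using pinv_props[OF K cl] by blast
lemma P1: "K (pinv K (K x)) = K x"
  using pinv_props[OF K cl] by blast
lemma P2: "pinv K (K (pinv K x)) = pinv K x"
  using pinv_props[OF K cl] by blast
lemma P3: "cinner (K (pinv K x)) y = cinner x (K (pinv K y))"
  using pinv_props[OF K cl] by blast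
lemma P4: "cinner (pinv K (K x)) y = cinner x (pinv K (K y))"
  using pinv_props[OF K cl] by blast

lemma adjL: "cinner (pinv K x) y = cinner x (cadjoint (pinv K) y)"
  by (rule cadjoint_eq[OF L_bcl])

lemma D1: "cadjoint (pinv K) (cadjoint K h) = K (pinv K h)"
proof (rule cinner_eqI')
  fix z
  have "cinner z (cadjoint (pinv K) (cadjoint K h)) = cinner (pinv K z) (cadjoint K h)"
    by (simp add: adjL)
  also have "\<dots> = cinner (K (pinv K z)) h" by (simp add: adjK)
  also have "\<dots> = cinner z (K (pinv K h))" by (rule P3)
  finally show "cinner z (cadjoint (pinv K) (cadjoint K h)) = cinner z (K (pinv K h))" .
qed

lemma D2: "cadjoint K (K (pinv K h)) = cadjoint K h"
proof (rule cinner_eqI')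
  fix z
  have "cinner z (cadjoint K (K (pinv K h))) = cinner (K z) (K (pinv K h))" by (simp add: adjK)
  also have "\<dots> = cinner (K (pinv K (K z))) h" by (simp add: P3)
  also have "\<dots> = cinner (K z) h" by (simp add: P1)
  also have "\<dots> = cinner z (cadjoint K h)" by (simp add: adjK)
  finally show "cinner z (cadjoint K (K (pinv K h))) = cinner z (cadjoint K h)" .
qed

lemma D3: "pinv K (K (cadjoint K f)) = cadjoint K f"
proof (rule cinner_eqI)
  fix z
  have "cinner (pinv K (K (cadjoint K f))) z = cinner (cadjoint K f) (pinv K (K z))" by (rule P4)
  also have "\<dots> = cnj (cinner (pinv K (K z)) (cadjoint K f))" by (rule cinner_commute)
  also have "\<dots> = cnj (cinner (K (pinv K (K z))) f)" by (simp add: adjK)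
  also have "\<dots> = cnj (cinner (K z) f)" by (simp add: P1)
  also have "\<dots> = cnj (cinner z (cadjoint K f))" by (simp add: adjK)
  also have "\<dots> = cinner (cadjoint K f) z" by (simp add: cinner_commute[of "cadjoint K f" z])
  finally show "cinner (pinv K (K (cadjoint K f))) z = cinner (cadjoint K f) z" .
qed

lemma wmF: "weakly_measurable M F"
  using pf unfolding parseval_cont_K_frame_def by blast

lemma intF: "integrable M (\<lambda>\<omega>. (cmod (cinner f (F \<omega>)))\<^sup>2)"
  using parseval_integral[OF pf] by blast

lemma intF_eq: "(\<integral>\<omega>. (cmod (cinner f (F \<omega>)))\<^sup>2 \<partial>M) = (norm (cadjoint K f))\<^sup>2"
  using parseval_integral[OF pf] by blast

lemma polF:
  "integrable M (\<lambda>\<omega>. cinner f (F \<omega>) * cnj (cinner g (F \<omega>)))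
   \<and> (\<integral>\<omega>. cinner f (F \<omega>) * cnj (cinner g (F \<omega>)) \<partial>M) = cinner (cadjoint K f) (cadjoint K g)"
proof
  let ?a = "\<lambda>\<omega>. cinner f (F \<omega>)" and ?b = "\<lambda>\<omega>. cinner g (F \<omega>)"
  note pol = polar_integral[OF wm_left[OF wmF] wm_left[OF wmF] intF intF, of f g]
  show "integrable M (\<lambda>\<omega>. cinner f (F \<omega>) * cnj (cinner g (F \<omega>)))" by (rule pol(1))
  have e1: "(\<lambda>\<omega>. (cmod (?a \<omega> + ?b \<omega>))\<^sup>2) = (\<lambda>\<omega>. (cmod (cinner (f + g) (F \<omega>)))\<^sup>2)"
    by (simp add: cinner_add_left)
  have e2: "(\<lambda>\<omega>. (cmod (?a \<omega> - ?b \<omega>))\<^sup>2) = (\<lambda>\<omega>. (cmod (cinner (f - g) (F \<omega>)))\<^sup>2)"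
    by (simp add: cinner_diff_left)
  have e3: "(\<lambda>\<omega>. (cmod (?a \<omega> + \<i> * ?b \<omega>))\<^sup>2) = (\<lambda>\<omega>. (cmod (cinner (f + \<i> *\<^sub>C g) (F \<omega>)))\<^sup>2)"
    by (simp add: cinner_add_left cinner_scaleC_left)
  have e4: "(\<lambda>\<omega>. (cmod (?a \<omega> - \<i> * ?b \<omega>))\<^sup>2) = (\<lambda>\<omega>. (cmod (cinner (f - \<i> *\<^sub>C g) (F \<omega>)))\<^sup>2)"
    by (simp add: cinner_diff_left cinner_scaleC_left)
  have A: "cadjoint K (f + g) = cadjoint K f + cadjoint K g"
    "cadjoint K (f - g) = cadjoint K f - cadjoint K g"
    "cadjoint K (f + \<i> *\<^sub>C g) = cadjoint K f + \<i> *\<^sub>C cadjoint K g"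
    "cadjoint K (f - \<i> *\<^sub>C g) = cadjoint K f - \<i> *\<^sub>C cadjoint K g"
    by (simp_all add: bcl_add[OF A_bcl] bcl_diff[OF A_bcl] bcl_scaleC[OF A_bcl])
  show "(\<integral>\<omega>. cinner f (F \<omega>) * cnj (cinner g (F \<omega>)) \<partial>M) = cinner (cadjoint K f) (cadjoint K g)"
    unfolding pol(2) e1 e2 e3 e4 intF_eq A polar_inner[of "cadjoint K f" "cadjoint K g"] ..
qed

lemma AE_perp: "AE \<omega> in M. cinner (F \<omega>) h = cinner (F \<omega>) (K (pinv K h))"
proof -
  define d where "d = h - K (pinv K h)"
  have Ad: "cadjoint K d = 0" unfolding d_def by (simp add: bcl_diff[OF A_bcl] D2)
  have m: "(\<lambda>\<omega>. ennreal ((cmod (cinner d (F \<omega>)))\<^sup>2)) \<in> borel_measurable M"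
    using sq_meas[OF wm_left[OF wmF, of d]] by measurable
  have "(\<integral>\<^sup>+\<omega>. ennreal ((cmod (cinner d (F \<omega>)))\<^sup>2) \<partial>M) = 0"
    using pf Ad unfolding parseval_cont_K_frame_def by simp
  then have "AE \<omega> in M. ennreal ((cmod (cinner d (F \<omega>)))\<^sup>2) = 0"
    using nn_integral_0_iff_AE[OF m] by simp
  then show ?thesis
  proof (rule AE_mp[OF _ AE_I2], intro impI)
    fix \<omega> assume "ennreal ((cmod (cinner d (F \<omega>)))\<^sup>2) = 0"
    then have "cinner d (F \<omega>) = 0" by simp
    then have "cinner (F \<omega>) d = 0" by (metis cinner_commute complex_cnj_zero)
    then show "cinner (F \<omega>) h = cinner (F \<omega>) (K (pinv K h))"
      unfolding d_def by (simp add: cinner_diff_right)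
  qed
qed

lemma weak_equiv:
  assumes mphi: "\<phi> \<in> borel_measurable M"
  shows "weak_integral_is M \<phi> F 0 \<longleftrightarrow> weak_integral_is M \<phi> (\<lambda>\<omega>. pinv K (F \<omega>)) 0"
proof -
  have l: "weak_integral_is M \<phi> F 0 \<longleftrightarrow>
     (\<forall>g. integrable M (\<lambda>\<omega>. \<phi> \<omega> * cinner (F \<omega>) g) \<and> (\<integral>\<omega>. \<phi> \<omega> * cinner (F \<omega>) g \<partial>M) = 0)"
    unfolding weak_integral_is_def by (simp add: cinner_scaleC_left)
  have r: "weak_integral_is M \<phi> (\<lambda>\<omega>. pinv K (F \<omega>)) 0 \<longleftrightarrow>
     (\<forall>g. integrable M (\<lambda>\<omega>. \<phi> \<omega> * cinner (F \<omega>) (cadjoint (pinv K) g))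
        \<and> (\<integral>\<omega>. \<phi> \<omega> * cinner (F \<omega>) (cadjoint (pinv K) g) \<partial>M) = 0)"
    unfolding weak_integral_is_def by (simp add: cinner_scaleC_left adjL)
  show ?thesis
    unfolding l r
  proof (intro iffI allI)
    fix g
    assume "\<forall>g. integrable M (\<lambda>\<omega>. \<phi> \<omega> * cinner (F \<omega>) g) \<and> (\<integral>\<omega>. \<phi> \<omega> * cinner (F \<omega>) g \<partial>M) = 0"
    then show "integrable M (\<lambda>\<omega>. \<phi> \<omega> * cinner (F \<omega>) (cadjoint (pinv K) g))
        \<and> (\<integral>\<omega>. \<phi> \<omega> * cinner (F \<omega>) (cadjoint (pinv K) g) \<partial>M) = 0" by blast
  next
    fix h
    assume H: "\<forall>g. integrable M (\<lambda>\<omega>. \<phi> \<omega> * cinner (F \<omega>) (cadjoint (pinv K) g))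
        \<and> (\<integral>\<omega>. \<phi> \<omega> * cinner (F \<omega>) (cadjoint (pinv K) g) \<partial>M) = 0"
    then have i: "integrable M (\<lambda>\<omega>. \<phi> \<omega> * cinner (F \<omega>) (K (pinv K h)))"
      and z: "(\<integral>\<omega>. \<phi> \<omega> * cinner (F \<omega>) (K (pinv K h)) \<partial>M) = 0"
      using H[rule_format, of "cadjoint K h"] by (simp_all add: D1)
    have ae: "AE \<omega> in M. \<phi> \<omega> * cinner (F \<omega>) (K (pinv K h)) = \<phi> \<omega> * cinner (F \<omega>) h"
      using AE_perp[of h] by eventually_elim simp
    have m1: "(\<lambda>\<omega>. \<phi> \<omega> * cinner (F \<omega>) h) \<in> borel_measurable M"
      using mphi wm_right[OF wmF, of h] by simp
    have m2: "(\<lambda>\<omega>. \<phi> \<omega> * cinner (F \<omega>) (K (pinv K h))) \<in> borel_measurable M"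
      using mphi wm_right[OF wmF, of "K (pinv K h)"] by simp
    show "integrable M (\<lambda>\<omega>. \<phi> \<omega> * cinner (F \<omega>) h) \<and> (\<integral>\<omega>. \<phi> \<omega> * cinner (F \<omega>) h \<partial>M) = 0"
    proof
      show "integrable M (\<lambda>\<omega>. \<phi> \<omega> * cinner (F \<omega>) h)"
        by (rule integrable_cong_AE_imp[OF i m1 ae])
      have "(\<integral>\<omega>. \<phi> \<omega> * cinner (F \<omega>) h \<partial>M) = (\<integral>\<omega>. \<phi> \<omega> * cinner (F \<omega>) (K (pinv K h)) \<partial>M)"
        by (rule integral_cong_AE[OF m1 m2]) (use ae in \<open>eventually_elim, metis\<close>)
      then show "(\<integral>\<omega>. \<phi> \<omega> * cinner (F \<omega>) h \<partial>M) = 0" using z by simp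
    qed
  qed
qed

lemma part1: "cont_L2_independent M F \<longleftrightarrow> cont_L2_independent M (\<lambda>\<omega>. pinv K (F \<omega>))"
  unfolding cont_L2_independent_def L2_fun_def using weak_equiv by blast

lemma F_dual: "dual_cont_bessel M (cadjoint K) (\<lambda>\<omega>. pinv K (F \<omega>)) F"
  unfolding dual_cont_bessel_def
proof (intro conjI allI)
  show "cont_bessel M F"
    unfolding cont_bessel_def
  proof (intro conjI)
    show "weakly_measurable M F" by (rule wmF)
    obtain BA where BA: "BA > 0" "\<And>x. norm (cadjoint K x) \<le> norm x * BA"
      using bcl_bound[OF A_bcl] by blast
    show "\<exists>B>0. \<forall>f. (\<integral>\<^sup>+\<omega>. ennreal ((cmod (cinner f (F \<omega>)))\<^sup>2) \<partial>M) \<le> ennreal (B * (norm f)\<^sup>2)"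
    proof (intro exI conjI allI)
      show "BA\<^sup>2 > 0" using BA by simp
      fix f
      have "(norm (cadjoint K f))\<^sup>2 \<le> (norm f * BA)\<^sup>2"
        using BA(2)[of f] by (intro power_mono) simp_all
      then have "(norm (cadjoint K f))\<^sup>2 \<le> BA\<^sup>2 * (norm f)\<^sup>2" by (simp add: power_mult_distrib ac_simps)
      then show "(\<integral>\<^sup>+\<omega>. ennreal ((cmod (cinner f (F \<omega>)))\<^sup>2) \<partial>M) \<le> ennreal (BA\<^sup>2 * (norm f)\<^sup>2)"
        using pf unfolding parseval_cont_K_frame_def by (simp add: ennreal_leI)
    qed
  qed
  fix f
  show "weak_integral_is M (\<lambda>\<omega>. cinner f (F \<omega>)) (\<lambda>\<omega>. pinv K (F \<omega>)) (cadjoint K f)"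
    unfolding weak_integral_is_def
  proof (intro allI conjI)
    fix g
    have e: "(\<lambda>\<omega>. cinner (cinner f (F \<omega>) *\<^sub>C pinv K (F \<omega>)) g)
       = (\<lambda>\<omega>. cinner f (F \<omega>) * cnj (cinner (cadjoint (pinv K) g) (F \<omega>)))"
      by (rule ext) (simp add: cinner_scaleC_left adjL cinner_commute[of "F _" "cadjoint (pinv K) g"])
    show "integrable M (\<lambda>\<omega>. cinner (cinner f (F \<omega>) *\<^sub>C pinv K (F \<omega>)) g)"
      unfolding e using polF by blast
    have "cinner (cadjoint K f) (cadjoint K (cadjoint (pinv K) g)) = cinner (cadjoint K f) g"
      by (simp add: adjK[symmetric] adjL[symmetric] D3)
    then show "(\<integral>\<omega>. cinner (cinner f (F \<omega>) *\<^sub>C pinv K (F \<omega>)) g \<partial>M) = cinner (cadjoint K f) g"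
      unfolding e using polF by simp
  qed
qed

lemma F_indep:
  fixes h :: 'h
  assumes U: "unique_dual_cont_bessel M K F" and h: "h \<noteq> 0"
  shows "cont_L2_independent M F"
  unfolding cont_L2_independent_def
proof (intro allI impI)
  fix \<phi> assume "L2_fun M \<phi> \<and> weak_integral_is M \<phi> F 0"
  then have mphi: "\<phi> \<in> borel_measurable M" and iphi: "integrable M (\<lambda>\<omega>. (cmod (\<phi> \<omega>))\<^sup>2)"
    and wphi: "weak_integral_is M \<phi> F 0"
    unfolding L2_fun_def by auto
  obtain G0 where G0: "dual_cont_bessel M K F G0" using U unfolding unique_dual_cont_bessel_def by blast
  have Uq: "\<And>G1 G2. dual_cont_bessel M K F G1 \<Longrightarrow> dual_cont_bessel M K F G2 \<Longrightarrow> AE \<omega> in M. G1 \<omega> = G2 \<omega>"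
    using U unfolding unique_dual_cont_bessel_def by blast
  have bG0: "cont_bessel M G0" using G0 unfolding dual_cont_bessel_def by blast
  then obtain B0 where B0: "B0 > 0" "\<And>f. (\<integral>\<^sup>+\<omega>. ennreal ((cmod (cinner f (G0 \<omega>)))\<^sup>2) \<partial>M) \<le> ennreal (B0 * (norm f)\<^sup>2)"
    unfolding cont_bessel_def by blast
  have wmG0: "weakly_measurable M G0" using bG0 unfolding cont_bessel_def by blast
  define G where "G \<omega> = G0 \<omega> + cnj (\<phi> \<omega>) *\<^sub>C h" for \<omega>
  have fG: "cinner f (G \<omega>) = cinner f (G0 \<omega>) + \<phi> \<omega> * cinner f h" for f \<omega>
    unfolding G_def by (simp add: cinner_add_right cinner_scaleC_right')
  have mG: "(\<lambda>\<omega>. cinner f (G \<omega>)) \<in> borel_measurable M" for f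
    unfolding fG using wm_left[OF wmG0, of f] mphi by simp
  define \<Phi> where "\<Phi> = (\<integral>\<omega>. (cmod (\<phi> \<omega>))\<^sup>2 \<partial>M)"
  have Phi0: "\<Phi> \<ge> 0" unfolding \<Phi>_def by (rule integral_nonneg_AE) simp
  have dG: "dual_cont_bessel M K F G"
    unfolding dual_cont_bessel_def
  proof (intro conjI allI)
    show "cont_bessel M G"
      unfolding cont_bessel_def
    proof (intro conjI)
      show "weakly_measurable M G" unfolding weakly_measurable_def using mG by blast
      show "\<exists>B>0. \<forall>f. (\<integral>\<^sup>+\<omega>. ennreal ((cmod (cinner f (G \<omega>)))\<^sup>2) \<partial>M) \<le> ennreal (B * (norm f)\<^sup>2)"
      proof (intro exI conjI allI)
        show "2 * B0 + 2 * (norm h)\<^sup>2 * \<Phi> > 0" using B0 Phi0 by (simp add: add_pos_nonneg)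
        fix f
        let ?a = "\<lambda>\<omega>. cinner f (G0 \<omega>)" and ?b = "\<lambda>\<omega>. \<phi> \<omega> * cinner f h"
        have ia: "integrable M (\<lambda>\<omega>. (cmod (?a \<omega>))\<^sup>2)" by (rule bessel_integrable[OF bG0])
        have ib: "integrable M (\<lambda>\<omega>. (cmod (?b \<omega>))\<^sup>2)"
          using sq_scale_integrable[OF iphi, of "cinner f h"] by (simp add: ac_simps)
        have iab: "integrable M (\<lambda>\<omega>. (cmod (cinner f (G \<omega>)))\<^sup>2)"
          unfolding fG using sq_add_integrable[OF wm_left[OF wmG0] _ ia ib] mphi by simp
        have nn: "(\<integral>\<^sup>+\<omega>. ennreal ((cmod (cinner f (G \<omega>)))\<^sup>2) \<partial>M) = ennreal (\<integral>\<omega>. (cmod (cinner f (G \<omega>)))\<^sup>2 \<partial>M)"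
          by (rule nn_integral_eq_integral[OF iab]) simp
        have nnA: "(\<integral>\<^sup>+\<omega>. ennreal ((cmod (?a \<omega>))\<^sup>2) \<partial>M) = ennreal (\<integral>\<omega>. (cmod (?a \<omega>))\<^sup>2 \<partial>M)"
          by (rule nn_integral_eq_integral[OF ia]) simp
        have IA: "(\<integral>\<omega>. (cmod (?a \<omega>))\<^sup>2 \<partial>M) \<le> B0 * (norm f)\<^sup>2"
          using B0(2)[of f] B0(1) unfolding nnA by (simp add: ennreal_le_iff)
        have cs: "(cmod (cinner f h))\<^sup>2 \<le> (norm f)\<^sup>2 * (norm h)\<^sup>2"
        proof -
          have "cmod (cinner f h) \<le> norm f * norm h" by (rule Cauchy_Schwarz)
          then have "(cmod (cinner f h))\<^sup>2 \<le> (norm f * norm h)\<^sup>2" by (intro power_mono) simp_all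
          then show ?thesis by (simp add: power_mult_distrib)
        qed
        have "(\<integral>\<omega>. (cmod (cinner f (G \<omega>)))\<^sup>2 \<partial>M) \<le> (\<integral>\<omega>. 2 * (cmod (?a \<omega>))\<^sup>2 + 2 * (cmod (?b \<omega>))\<^sup>2 \<partial>M)"
        proof (rule integral_mono[OF iab])
          show "integrable M (\<lambda>\<omega>. 2 * (cmod (?a \<omega>))\<^sup>2 + 2 * (cmod (?b \<omega>))\<^sup>2)" using ia ib by simp
          fix \<omega>
          let ?u = "cmod (?a \<omega>)" and ?v = "cmod (?b \<omega>)"
          have "cmod (cinner f (G \<omega>)) \<le> ?u + ?v" unfolding fG by (rule norm_triangle_ineq)
          then have "(cmod (cinner f (G \<omega>)))\<^sup>2 \<le> (?u + ?v)\<^sup>2" by (simp add: power_mono)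
          also have "\<dots> \<le> 2 * ?u\<^sup>2 + 2 * ?v\<^sup>2"
            using sum_squares_bound[of ?u ?v] by (simp add: power2_sum)
          finally show "(cmod (cinner f (G \<omega>)))\<^sup>2 \<le> 2 * ?u\<^sup>2 + 2 * ?v\<^sup>2" .
        qed
        also have "\<dots> = 2 * (\<integral>\<omega>. (cmod (?a \<omega>))\<^sup>2 \<partial>M) + 2 * ((cmod (cinner f h))\<^sup>2 * \<Phi>)"
          using ia iphi by (simp add: \<Phi>_def norm_mult power_mult_distrib ac_simps)
        also have "\<dots> \<le> 2 * (B0 * (norm f)\<^sup>2) + 2 * (((norm f)\<^sup>2 * (norm h)\<^sup>2) * \<Phi>)"
          using IA cs Phi0 by (intro add_mono mult_left_mono mult_right_mono) simp_all
        also have "\<dots> = (2 * B0 + 2 * (norm h)\<^sup>2 * \<Phi>) * (norm f)\<^sup>2" by (simp add: algebra_simps)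
        finally show "(\<integral>\<^sup>+\<omega>. ennreal ((cmod (cinner f (G \<omega>)))\<^sup>2) \<partial>M) \<le> ennreal ((2 * B0 + 2 * (norm h)\<^sup>2 * \<Phi>) * (norm f)\<^sup>2)"
          unfolding nn by (rule ennreal_leI)
      qed
    qed
    fix f
    show "weak_integral_is M (\<lambda>\<omega>. cinner f (G \<omega>)) F (K f)"
      unfolding weak_integral_is_def
    proof (intro allI conjI)
      fix g
      have W0: "integrable M (\<lambda>\<omega>. cinner (cinner f (G0 \<omega>) *\<^sub>C F \<omega>) g)"
        "(\<integral>\<omega>. cinner (cinner f (G0 \<omega>) *\<^sub>C F \<omega>) g \<partial>M) = cinner (K f) g"
        using G0 unfolding dual_cont_bessel_def weak_integral_is_def by blast+
      have W1: "integrable M (\<lambda>\<omega>. cinner (\<phi> \<omega> *\<^sub>C F \<omega>) g)"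
        "(\<integral>\<omega>. cinner (\<phi> \<omega> *\<^sub>C F \<omega>) g \<partial>M) = 0"
        using wphi unfolding weak_integral_is_def by auto
      have e: "(\<lambda>\<omega>. cinner (cinner f (G \<omega>) *\<^sub>C F \<omega>) g)
        = (\<lambda>\<omega>. cinner (cinner f (G0 \<omega>) *\<^sub>C F \<omega>) g + cinner f h * cinner (\<phi> \<omega> *\<^sub>C F \<omega>) g)"
        by (rule ext) (simp add: fG cinner_scaleC_left algebra_simps)
      show "integrable M (\<lambda>\<omega>. cinner (cinner f (G \<omega>) *\<^sub>C F \<omega>) g)"
        unfolding e using W0 W1 by simp
      show "(\<integral>\<omega>. cinner (cinner f (G \<omega>) *\<^sub>C F \<omega>) g \<partial>M) = cinner (K f) g"
        unfolding e using W0 W1 by simp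
    qed
  qed
  have "AE \<omega> in M. G0 \<omega> = G \<omega>" by (rule Uq[OF G0 dG])
  then show "AE \<omega> in M. \<phi> \<omega> = 0"
  proof (rule AE_mp[OF _ AE_I2], intro impI)
    fix \<omega> assume "G0 \<omega> = G \<omega>"
    then have "cnj (\<phi> \<omega>) *\<^sub>C h = 0" unfolding G_def by simp
    then have "cmod (cnj (\<phi> \<omega>)) * norm h = 0" by (metis norm_scaleC norm_zero)
    then show "\<phi> \<omega> = 0" using h by simp
  qed
qed

lemma part2:
  assumes U: "unique_dual_cont_bessel M K F"
  shows "unique_dual_cont_bessel M (cadjoint K) (\<lambda>\<omega>. pinv K (F \<omega>))"
  unfolding unique_dual_cont_bessel_def
proof (intro conjI allI impI)
  show "\<exists>G. dual_cont_bessel M (cadjoint K) (\<lambda>\<omega>. pinv K (F \<omega>)) G" using F_dual by blast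
  fix G1 G2
  assume "dual_cont_bessel M (cadjoint K) (\<lambda>\<omega>. pinv K (F \<omega>)) G1 \<and> dual_cont_bessel M (cadjoint K) (\<lambda>\<omega>. pinv K (F \<omega>)) G2"
  then have d1: "dual_cont_bessel M (cadjoint K) (\<lambda>\<omega>. pinv K (F \<omega>)) G1"
    and d2: "dual_cont_bessel M (cadjoint K) (\<lambda>\<omega>. pinv K (F \<omega>)) G2" by auto
  show "AE \<omega> in M. G1 \<omega> = G2 \<omega>"
  proof (cases "\<forall>x::'h. x = 0")
    case True
    then show ?thesis by (intro AE_I2) metis
  next
    case False
    then obtain h :: 'h where h: "h \<noteq> 0" by blast
    have indL: "cont_L2_independent M (\<lambda>\<omega>. pinv K (F \<omega>))"
      using F_indep[OF U h] part1 by blast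
    have b1: "cont_bessel M G1" and b2: "cont_bessel M G2"
      using d1 d2 unfolding dual_cont_bessel_def by auto
    have wm1: "weakly_measurable M G1" and wm2: "weakly_measurable M G2"
      using b1 b2 unfolding cont_bessel_def by auto
    have aef: "AE \<omega> in M. cinner f (G1 \<omega>) - cinner f (G2 \<omega>) = 0" for f
    proof -
      let ?a = "\<lambda>\<omega>. cinner f (G1 \<omega>)" and ?b = "\<lambda>\<omega>. cinner f (G2 \<omega>)"
      have ma: "?a \<in> borel_measurable M" by (rule wm_left[OF wm1])
      have mb: "(\<lambda>\<omega>. (-1) * ?b \<omega>) \<in> borel_measurable M" using wm_left[OF wm2, of f] by simp
      have L2: "L2_fun M (\<lambda>\<omega>. ?a \<omega> - ?b \<omega>)"
        unfolding L2_fun_def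
      proof
        show "(\<lambda>\<omega>. ?a \<omega> - ?b \<omega>) \<in> borel_measurable M" using ma wm_left[OF wm2, of f] by simp
        show "integrable M (\<lambda>\<omega>. (cmod (?a \<omega> - ?b \<omega>))\<^sup>2)"
          using sq_add_integrable[OF ma mb bessel_integrable[OF b1] sq_scale_integrable[OF bessel_integrable[OF b2], of "-1"]]
          by simp
      qed
      have W: "weak_integral_is M (\<lambda>\<omega>. ?a \<omega> - ?b \<omega>) (\<lambda>\<omega>. pinv K (F \<omega>)) 0"
        unfolding weak_integral_is_def
      proof (intro allI conjI)
        fix g
        have W1: "integrable M (\<lambda>\<omega>. cinner (?a \<omega> *\<^sub>C pinv K (F \<omega>)) g)"
          "(\<integral>\<omega>. cinner (?a \<omega> *\<^sub>C pinv K (F \<omega>)) g \<partial>M) = cinner (cadjoint K f) g"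
          using d1 unfolding dual_cont_bessel_def weak_integral_is_def by blast+
        have W2: "integrable M (\<lambda>\<omega>. cinner (?b \<omega> *\<^sub>C pinv K (F \<omega>)) g)"
          "(\<integral>\<omega>. cinner (?b \<omega> *\<^sub>C pinv K (F \<omega>)) g \<partial>M) = cinner (cadjoint K f) g"
          using d2 unfolding dual_cont_bessel_def weak_integral_is_def by blast+
        have e: "(\<lambda>\<omega>. cinner ((?a \<omega> - ?b \<omega>) *\<^sub>C pinv K (F \<omega>)) g)
          = (\<lambda>\<omega>. cinner (?a \<omega> *\<^sub>C pinv K (F \<omega>)) g - cinner (?b \<omega> *\<^sub>C pinv K (F \<omega>)) g)"
          by (rule ext) (simp add: scaleC_diff_left cinner_diff_left)
        show "integrable M (\<lambda>\<omega>. cinner ((?a \<omega> - ?b \<omega>) *\<^sub>C pinv K (F \<omega>)) g)"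
          unfolding e using W1 W2 by simp
        show "(\<integral>\<omega>. cinner ((?a \<omega> - ?b \<omega>) *\<^sub>C pinv K (F \<omega>)) g \<partial>M) = cinner 0 g"
          unfolding e using W1 W2 by simp
      qed
      show ?thesis using indL L2 W unfolding cont_L2_independent_def by blast
    qed
    obtain D :: "'h set" where D: "countable D" "\<And>X. open X \<Longrightarrow> X \<noteq> {} \<Longrightarrow> \<exists>d\<in>D. d \<in> X"
      using countable_dense_setE by blast
    have "AE \<omega> in M. \<forall>f\<in>D. cinner f (G1 \<omega>) - cinner f (G2 \<omega>) = 0"
      unfolding AE_ball_countable[OF D(1)] using aef by blast
    then show ?thesis
    proof (rule AE_mp[OF _ AE_I2], intro impI)
      fix \<omega> assume z: "\<forall>f\<in>D. cinner f (G1 \<omega>) - cinner f (G2 \<omega>) = 0"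
      have "G1 \<omega> - G2 \<omega> = 0"
        by (rule dense_zero[OF D(2)]) (use z in \<open>simp_all add: cinner_diff_right\<close>)
      then show "G1 \<omega> = G2 \<omega>" by simp
    qed
  qed
qed

end

theorem theorem3p8:
  fixes M :: "'w measure"
    and K :: "'h::{chilbert_space, second_countable_topology} \<Rightarrow> 'h"
    and F :: "'w \<Rightarrow> 'h"
  assumes "bounded_clinear K"
    and "closed (range K)"
    and "parseval_cont_K_frame M K F"
  shows "(cont_L2_independent M F \<longleftrightarrow> cont_L2_independent M (\<lambda>\<omega>. pinv K (F \<omega>)))
         \<and> (unique_dual_cont_bessel M K F \<longrightarrow>
              unique_dual_cont_bessel M (cadjoint K) (\<lambda>\<omega>. pinv K (F \<omega>)))"
  using part1[OF assms] part2[OF assms] by blast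


end
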